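(* Let $G$ be a reaction network whose stoichiometric subspace is one-dimensional, and suppose $cap_{pos}(G)<+\infty$. (a) If $cap_{pos}(G)$ is even, then $cap_{stab}(G)=\frac{cap_{pos}(G)}{2}$. (b) If $cap_{pos}(G)$ is odd, then $cap_{stab}(G)=\frac{cap_{pos}(G)-1}{2}$ if $\mathcal W\cap\mathcal B=\emptyset$, and $cap_{stab}(G)=\frac{cap_{pos}(G)+1}{2}$ if $\mathcal W\cap\mathcal B\neq\emptyset$, where $\mathcal W=\{(\kappa^*,c^* ): \text{for the rate-constant vector }\kappa^*,\ G \text{ has } cap_{pos}(G) \text{ positive steady states in } \mathcal P_{c^*}\}$ and $\mathcal B=\Big\{(\kappa^*,c^* ): \sum_{j\in\mathcal L}(\beta_{1j}-\alpha_{1j})\kappa^*_j\prod_{i\in\mathcal J}|A_i|^{\alpha_{ij}}\prod_{i\in\{1,\dots,s\}\setminus\mathcal J}B_i^{\alpha_{ij}}\prod_{k\in\mathcal H,\,k\neq\tau}\Big(\frac{B_k}{|A_k|}-\frac{A_k}{|A_k|}\frac{B_\tau}{A_\tau}\Big)^{\gamma_{kj}}>0\Big\}$, the quantities $A_i,B_i,\gamma_{kj},\mathcal J,\mathcal H,\tau,\mathcal L$ being those computed from $c^*$.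
   Context: A reaction network $G$ has species $X_1,\dots,X_s$ and $m$ reactions $\sum_{i}\alpha_{ij}X_i\to\sum_i\beta_{ij}X_i$ ($j=1,\dots,m$), with $\alpha_{ij},\beta_{ij}\in\mathbb Z_{\ge0}$ and $(\alpha_{1j},\dots,\alpha_{sj})\neq(\beta_{1j},\dots,\beta_{sj})$. The stoichiometric matrix $\mathcal N$ is the $s\times m$ matrix with entries $\beta_{ij}-\alpha_{ij}$; its image $S$ is the stoichiometric subspace. For a rate-constant vector $\kappa\in\mathbb R^m_{>0}$, mass-action kinetics gives $\dot x=f(\kappa;x)=\mathcal N(\kappa_1\prod_i x_i^{\alpha_{i1}},\dots,\kappa_m\prod_i x_i^{\alpha_{im}})^\top$. Standing convention: when $S$ is one-dimensional, species are labelled so that $\beta_{11}-\alpha_{11}\neq0$; then for each $j$ there is $\lambda_j\ne0$ with $\beta_{ij}-\alpha_{ij}=\lambda_j(\beta_{i1}-\alpha_{i1})$ for all $i$ ($\lambda_1=1$), and for a total-constant vector $c\in\mathbb R^{s-1}$ the stoichiometric compatibility class is $\mathcal P_c=\{x\in\mathbb R^s_{\ge0}:(\beta_{i1}-\alpha_{i1})x_1-(\beta_{11}-\alpha_{11})x_i=c_{i-1},\ i=2,\dots,s\}$. A steady state is $x\in\mathbb R^s_{\ge0}$ with $f(\kappa;x)=0$; it is positive if $x\in\mathbb R^s_{>0}$, nondegenerate if $\mathrm{Jac}_f(x)(S)=S$ (Jacobian with respect to $x$), and stable if it is nondegenerate and all nonzero eigenvalues of $\mathrm{Jac}_f(x)$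 have negative real parts. $G$ admits $N$ (nondegenerate, resp. stable) positive steady states if for some $\kappa$ and some $c$ it has $N$ such positive steady states in $\mathcal P_c$; $cap_{pos}(G)$, $cap_{nondeg}(G)$, $cap_{stab}(G)$ are the maxima of such $N$ in $\mathbb Z_{\ge0}\cup\{+\infty\}$. Notation for a fixed $c^*\in\mathbb R^{s-1}$: $A_1=1$, $B_1=0$, and for $2\le i\le s$, $A_i=\frac{\beta_{i1}-\alpha_{i1}}{\beta_{11}-\alpha_{11}}$, $B_i=-\frac{c^*_{i-1}}{\beta_{11}-\alpha_{11}}$. For each $i$, $[i]=\{k:A_k\neq0,\ B_k/A_k=B_i/A_i\}$ if $A_i\ne0$ and $[i]=\{k:A_k=0\}$ if $A_i=0$; $r$ is the number of distinct classes and species are labelled so that $1,\dots,r$ are representatives of the distinct classes. For $k\le r$: $\varphi_k=\min_{1\le j\le m}\sum_{i\in[k]}\alpha_{ij}$ and $\gamma_{kj}=\sum_{i\in[k]}\alpha_{ij}-\varphi_k$. $\mathcal J=\{i:A_i\neq0\}$, $\mathcal H=\{k\in\{1,\dots,r\}\cap\mathcal J:\gamma_{k1},\dots,\gamma_{km}\text{ are not all the same}\}$. Standing assumption: if for some rate-constant vector $G$ has $N$ positive steady states in $\mathcal P_{c^*}$ with $0<N<\infty$, species are labelled so that $1\in\mathcal H$. For each $i$, $I_i=(-B_i/A_i,+\infty)$ if $A_i>0$, $I_i=(0,+\infty)$ if $A_i=0$, $I_i=(0,-B_i/A_i)$ if $A_i<0$; $I=\bigcap_{k\in\mathcal H}I_k$.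 $\tau$ is the index in $\mathcal H$ with $A_\tau>0$ such that $-B_\tau/A_\tau$ is the left endpoint of $I$; $\mathcal L=\{j\in\{1,\dots,m\}:\gamma_{\tau j}=0\}$. *)

theory Defs
  imports Complex_Main "HOL-Library.Extended_Nat"
begin

text \<open>Reaction network with species 0..s-1 (paper's species 1..s) and reactions 0..m-1
  (paper's reactions 1..m); alpha i j, beta i j are the stoichiometric coefficients.
  Vectors in R^s are functions nat => real vanishing outside {..<s}.\<close>

definition Nm :: "(nat \<Rightarrow> nat \<Rightarrow> nat) \<Rightarrow> (nat \<Rightarrow> nat \<Rightarrow> nat) \<Rightarrow> nat \<Rightarrow> nat \<Rightarrow> real" where
  "Nm \<alpha> \<beta> i j = real (\<beta> i j) - real (\<alpha> i j)"

definition is_network :: "nat \<Rightarrow> nat \<Rightarrow> (nat \<Rightarrow> nat \<Rightarrow> nat) \<Rightarrow> (nat \<Rightarrow> nat \<Rightarrow> nat) \<Rightarrow> bool" where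
  "is_network s m \<alpha> \<beta> \<longleftrightarrow> (\<forall>j<m. \<exists>i<s. \<alpha> i j \<noteq> \<beta> i j)"

definition stoich_subspace :: "nat \<Rightarrow> nat \<Rightarrow> (nat \<Rightarrow> nat \<Rightarrow> nat) \<Rightarrow> (nat \<Rightarrow> nat \<Rightarrow> nat) \<Rightarrow> (nat \<Rightarrow> real) set" where
  "stoich_subspace s m \<alpha> \<beta> =
     {v. \<exists>a :: nat \<Rightarrow> real. v = (\<lambda>i. if i < s then (\<Sum>j<m. Nm \<alpha> \<beta> i j * a j) else 0)}"

definition one_dim_stoich :: "nat \<Rightarrow> nat \<Rightarrow> (nat \<Rightarrow> nat \<Rightarrow> nat) \<Rightarrow> (nat \<Rightarrow> nat \<Rightarrow> nat) \<Rightarrow> bool" where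
  "one_dim_stoich s m \<alpha> \<beta> \<longleftrightarrow>
     (\<exists>w :: nat \<Rightarrow> real. (\<exists>i<s. w i \<noteq> 0) \<and>
        stoich_subspace s m \<alpha> \<beta> = {v. \<exists>t::real. v = (\<lambda>i. t * w i)})"

definition mass_action :: "nat \<Rightarrow> nat \<Rightarrow> (nat \<Rightarrow> nat \<Rightarrow> nat) \<Rightarrow> (nat \<Rightarrow> nat \<Rightarrow> nat)
     \<Rightarrow> (nat \<Rightarrow> real) \<Rightarrow> (nat \<Rightarrow> real) \<Rightarrow> nat \<Rightarrow> real" where
  "mass_action s m \<alpha> \<beta> \<kappa> x i = (\<Sum>j<m. Nm \<alpha> \<beta> i j * (\<kappa> j * (\<Prod>l<s. x l ^ \<alpha> l j)))"

definition jac :: "nat \<Rightarrow> nat \<Rightarrow> (nat \<Rightarrow> nat \<Rightarrow> nat) \<Rightarrow> (nat \<Rightarrow> nat \<Rightarrow> nat)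
     \<Rightarrow> (nat \<Rightarrow> real) \<Rightarrow> (nat \<Rightarrow> real) \<Rightarrow> nat \<Rightarrow> nat \<Rightarrow> real" where
  "jac s m \<alpha> \<beta> \<kappa> x i k = (\<Sum>j<m. Nm \<alpha> \<beta> i j * (\<kappa> j *
      (real (\<alpha> k j) * x k ^ (\<alpha> k j - 1) * (\<Prod>l\<in>{..<s} - {k}. x l ^ \<alpha> l j))))"

definition jac_map :: "nat \<Rightarrow> nat \<Rightarrow> (nat \<Rightarrow> nat \<Rightarrow> nat) \<Rightarrow> (nat \<Rightarrow> nat \<Rightarrow> nat)
     \<Rightarrow> (nat \<Rightarrow> real) \<Rightarrow> (nat \<Rightarrow> real) \<Rightarrow> (nat \<Rightarrow> real) \<Rightarrow> (nat \<Rightarrow> real)" where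
  "jac_map s m \<alpha> \<beta> \<kappa> x v = (\<lambda>i. if i < s then (\<Sum>k<s. jac s m \<alpha> \<beta> \<kappa> x i k * v k) else 0)"

definition nondegenerate :: "nat \<Rightarrow> nat \<Rightarrow> (nat \<Rightarrow> nat \<Rightarrow> nat) \<Rightarrow> (nat \<Rightarrow> nat \<Rightarrow> nat)
     \<Rightarrow> (nat \<Rightarrow> real) \<Rightarrow> (nat \<Rightarrow> real) \<Rightarrow> bool" where
  "nondegenerate s m \<alpha> \<beta> \<kappa> x \<longleftrightarrow>
     jac_map s m \<alpha> \<beta> \<kappa> x ` stoich_subspace s m \<alpha> \<beta> = stoich_subspace s m \<alpha> \<beta>"

definition is_eigenvalue :: "nat \<Rightarrow> (nat \<Rightarrow> nat \<Rightarrow> real) \<Rightarrow> complex \<Rightarrow> bool" where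
  "is_eigenvalue s M mu \<longleftrightarrow> (\<exists>v :: nat \<Rightarrow> complex. (\<exists>i<s. v i \<noteq> 0) \<and>
      (\<forall>i<s. (\<Sum>k<s. complex_of_real (M i k) * v k) = mu * v i))"

definition stable :: "nat \<Rightarrow> nat \<Rightarrow> (nat \<Rightarrow> nat \<Rightarrow> nat) \<Rightarrow> (nat \<Rightarrow> nat \<Rightarrow> nat)
     \<Rightarrow> (nat \<Rightarrow> real) \<Rightarrow> (nat \<Rightarrow> real) \<Rightarrow> bool" where
  "stable s m \<alpha> \<beta> \<kappa> x \<longleftrightarrow> nondegenerate s m \<alpha> \<beta> \<kappa> x \<and>
     (\<forall>mu. is_eigenvalue s (jac s m \<alpha> \<beta> \<kappa> x) mu \<and> mu \<noteq> 0 \<longrightarrow> Re mu < 0)"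

text \<open>Stoichiometric compatibility class P_c, written w.r.t. a pivot species p playing the role
  of the paper's species 1 (the paper's convention is p = first species).  The total-constant
  vector c is indexed by the remaining species: c i for i \<noteq> p (paper: c_{i-1}).\<close>
definition compat_class :: "nat \<Rightarrow> nat \<Rightarrow> (nat \<Rightarrow> nat \<Rightarrow> nat) \<Rightarrow> (nat \<Rightarrow> nat \<Rightarrow> nat)
     \<Rightarrow> nat \<Rightarrow> (nat \<Rightarrow> real) \<Rightarrow> (nat \<Rightarrow> real) set" where
  "compat_class s m \<alpha> \<beta> p c = {x. (\<forall>i<s. x i \<ge> 0) \<and> (\<forall>i. s \<le> i \<longrightarrow> x i = 0) \<and>
      (\<forall>i<s. i \<noteq> p \<longrightarrow> Nm \<alpha> \<beta> i 0 * x p - Nm \<alpha> \<beta> p 0 * x i = c i)}"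

definition pos_ss :: "nat \<Rightarrow> nat \<Rightarrow> (nat \<Rightarrow> nat \<Rightarrow> nat) \<Rightarrow> (nat \<Rightarrow> nat \<Rightarrow> nat)
     \<Rightarrow> nat \<Rightarrow> (nat \<Rightarrow> real) \<Rightarrow> (nat \<Rightarrow> real) \<Rightarrow> (nat \<Rightarrow> real) set" where
  "pos_ss s m \<alpha> \<beta> p \<kappa> c = {x \<in> compat_class s m \<alpha> \<beta> p c. (\<forall>i<s. x i > 0) \<and>
      (\<forall>i<s. mass_action s m \<alpha> \<beta> \<kappa> x i = 0)}"

definition stab_ss :: "nat \<Rightarrow> nat \<Rightarrow> (nat \<Rightarrow> nat \<Rightarrow> nat) \<Rightarrow> (nat \<Rightarrow> nat \<Rightarrow> nat)
     \<Rightarrow> nat \<Rightarrow> (nat \<Rightarrow> real) \<Rightarrow> (nat \<Rightarrow> real) \<Rightarrow> (nat \<Rightarrow> real) set" where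
  "stab_ss s m \<alpha> \<beta> p \<kappa> c = {x \<in> pos_ss s m \<alpha> \<beta> p \<kappa> c. stable s m \<alpha> \<beta> \<kappa> x}"

definition ecard :: "'a set \<Rightarrow> enat" where
  "ecard A = (if finite A then enat (card A) else \<infinity>)"

definition rate_vec :: "nat \<Rightarrow> (nat \<Rightarrow> real) \<Rightarrow> bool" where
  "rate_vec m \<kappa> \<longleftrightarrow> (\<forall>j<m. \<kappa> j > 0)"

definition cap_pos :: "nat \<Rightarrow> nat \<Rightarrow> (nat \<Rightarrow> nat \<Rightarrow> nat) \<Rightarrow> (nat \<Rightarrow> nat \<Rightarrow> nat) \<Rightarrow> enat" where
  "cap_pos s m \<alpha> \<beta> = Sup {ecard (pos_ss s m \<alpha> \<beta> 0 \<kappa> c) | \<kappa> c. rate_vec m \<kappa>}"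

definition cap_stab :: "nat \<Rightarrow> nat \<Rightarrow> (nat \<Rightarrow> nat \<Rightarrow> nat) \<Rightarrow> (nat \<Rightarrow> nat \<Rightarrow> nat) \<Rightarrow> enat" where
  "cap_stab s m \<alpha> \<beta> = Sup {ecard (stab_ss s m \<alpha> \<beta> 0 \<kappa> c) | \<kappa> c. rate_vec m \<kappa>}"

definition Acoef :: "(nat \<Rightarrow> nat \<Rightarrow> nat) \<Rightarrow> (nat \<Rightarrow> nat \<Rightarrow> nat) \<Rightarrow> nat \<Rightarrow> nat \<Rightarrow> real" where
  "Acoef \<alpha> \<beta> p i = Nm \<alpha> \<beta> i 0 / Nm \<alpha> \<beta> p 0"

definition Bcoef :: "(nat \<Rightarrow> nat \<Rightarrow> nat) \<Rightarrow> (nat \<Rightarrow> nat \<Rightarrow> nat) \<Rightarrow> nat \<Rightarrow> (nat \<Rightarrow> real) \<Rightarrow> nat \<Rightarrow> real" where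
  "Bcoef \<alpha> \<beta> p c i = (if i = p then 0 else - c i / Nm \<alpha> \<beta> p 0)"

definition cls :: "nat \<Rightarrow> (nat \<Rightarrow> nat \<Rightarrow> nat) \<Rightarrow> (nat \<Rightarrow> nat \<Rightarrow> nat) \<Rightarrow> nat \<Rightarrow> (nat \<Rightarrow> real) \<Rightarrow> nat \<Rightarrow> nat set" where
  "cls s \<alpha> \<beta> p c i = (if Acoef \<alpha> \<beta> p i \<noteq> 0
     then {k. k < s \<and> Acoef \<alpha> \<beta> p k \<noteq> 0 \<and>
              Bcoef \<alpha> \<beta> p c k / Acoef \<alpha> \<beta> p k = Bcoef \<alpha> \<beta> p c i / Acoef \<alpha> \<beta> p i}
     else {k. k < s \<and> Acoef \<alpha> \<beta> p k = 0})"

definition is_rep :: "nat \<Rightarrow> (nat \<Rightarrow> nat \<Rightarrow> nat) \<Rightarrow> (nat \<Rightarrow> nat \<Rightarrow> nat) \<Rightarrow> nat \<Rightarrow> (nat \<Rightarrow> real) \<Rightarrow> nat \<Rightarrow> bool" where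
  "is_rep s \<alpha> \<beta> p c k \<longleftrightarrow> k < s \<and>
     (if p \<in> cls s \<alpha> \<beta> p c k then k = p else k = Min (cls s \<alpha> \<beta> p c k))"

definition phi :: "nat \<Rightarrow> nat \<Rightarrow> (nat \<Rightarrow> nat \<Rightarrow> nat) \<Rightarrow> (nat \<Rightarrow> nat \<Rightarrow> nat) \<Rightarrow> nat \<Rightarrow> (nat \<Rightarrow> real) \<Rightarrow> nat \<Rightarrow> nat" where
  "phi s m \<alpha> \<beta> p c k = Min {(\<Sum>i\<in>cls s \<alpha> \<beta> p c k. \<alpha> i j) | j. j < m}"

definition gam :: "nat \<Rightarrow> nat \<Rightarrow> (nat \<Rightarrow> nat \<Rightarrow> nat) \<Rightarrow> (nat \<Rightarrow> nat \<Rightarrow> nat) \<Rightarrow> nat \<Rightarrow> (nat \<Rightarrow> real) \<Rightarrow> nat \<Rightarrow> nat \<Rightarrow> nat" where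
  "gam s m \<alpha> \<beta> p c k j = (\<Sum>i\<in>cls s \<alpha> \<beta> p c k. \<alpha> i j) - phi s m \<alpha> \<beta> p c k"

definition Jset :: "nat \<Rightarrow> (nat \<Rightarrow> nat \<Rightarrow> nat) \<Rightarrow> (nat \<Rightarrow> nat \<Rightarrow> nat) \<Rightarrow> nat \<Rightarrow> nat set" where
  "Jset s \<alpha> \<beta> p = {i. i < s \<and> Acoef \<alpha> \<beta> p i \<noteq> 0}"

definition Hset :: "nat \<Rightarrow> nat \<Rightarrow> (nat \<Rightarrow> nat \<Rightarrow> nat) \<Rightarrow> (nat \<Rightarrow> nat \<Rightarrow> nat) \<Rightarrow> nat \<Rightarrow> (nat \<Rightarrow> real) \<Rightarrow> nat set" where
  "Hset s m \<alpha> \<beta> p c = {k. is_rep s \<alpha> \<beta> p c k \<and> k \<in> Jset s \<alpha> \<beta> p \<and>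
      \<not> (\<forall>j<m. \<forall>j'<m. gam s m \<alpha> \<beta> p c k j = gam s m \<alpha> \<beta> p c k j')}"

definition Iint :: "(nat \<Rightarrow> nat \<Rightarrow> nat) \<Rightarrow> (nat \<Rightarrow> nat \<Rightarrow> nat) \<Rightarrow> nat \<Rightarrow> (nat \<Rightarrow> real) \<Rightarrow> nat \<Rightarrow> real set" where
  "Iint \<alpha> \<beta> p c i =
     (if Acoef \<alpha> \<beta> p i > 0 then {- Bcoef \<alpha> \<beta> p c i / Acoef \<alpha> \<beta> p i <..}
      else if Acoef \<alpha> \<beta> p i = 0 then {0<..}
      else {0 <..< - Bcoef \<alpha> \<beta> p c i / Acoef \<alpha> \<beta> p i})"

definition Iset :: "nat \<Rightarrow> nat \<Rightarrow> (nat \<Rightarrow> nat \<Rightarrow> nat) \<Rightarrow> (nat \<Rightarrow> nat \<Rightarrow> nat) \<Rightarrow> nat \<Rightarrow> (nat \<Rightarrow> real) \<Rightarrow> real set" where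
  "Iset s m \<alpha> \<beta> p c = (\<Inter>k\<in>Hset s m \<alpha> \<beta> p c. Iint \<alpha> \<beta> p c k)"

definition is_tau :: "nat \<Rightarrow> nat \<Rightarrow> (nat \<Rightarrow> nat \<Rightarrow> nat) \<Rightarrow> (nat \<Rightarrow> nat \<Rightarrow> nat) \<Rightarrow> nat \<Rightarrow> (nat \<Rightarrow> real) \<Rightarrow> nat \<Rightarrow> bool" where
  "is_tau s m \<alpha> \<beta> p c t \<longleftrightarrow> t \<in> Hset s m \<alpha> \<beta> p c \<and> Acoef \<alpha> \<beta> p t > 0 \<and>
     Iset s m \<alpha> \<beta> p c \<noteq> {} \<and> bdd_below (Iset s m \<alpha> \<beta> p c) \<and>
     Inf (Iset s m \<alpha> \<beta> p c) = - Bcoef \<alpha> \<beta> p c t / Acoef \<alpha> \<beta> p t"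

definition Lset :: "nat \<Rightarrow> nat \<Rightarrow> (nat \<Rightarrow> nat \<Rightarrow> nat) \<Rightarrow> (nat \<Rightarrow> nat \<Rightarrow> nat) \<Rightarrow> nat \<Rightarrow> (nat \<Rightarrow> real) \<Rightarrow> nat \<Rightarrow> nat set" where
  "Lset s m \<alpha> \<beta> p c t = {j. j < m \<and> gam s m \<alpha> \<beta> p c t j = 0}"

definition in_B :: "nat \<Rightarrow> nat \<Rightarrow> (nat \<Rightarrow> nat \<Rightarrow> nat) \<Rightarrow> (nat \<Rightarrow> nat \<Rightarrow> nat) \<Rightarrow> nat
     \<Rightarrow> (nat \<Rightarrow> real) \<Rightarrow> (nat \<Rightarrow> real) \<Rightarrow> bool" where
  "in_B s m \<alpha> \<beta> p \<kappa> c \<longleftrightarrow> (\<exists>t. is_tau s m \<alpha> \<beta> p c t \<and>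
     (\<Sum>j\<in>Lset s m \<alpha> \<beta> p c t. Nm \<alpha> \<beta> p j * \<kappa> j
        * (\<Prod>i\<in>Jset s \<alpha> \<beta> p. \<bar>Acoef \<alpha> \<beta> p i\<bar> ^ \<alpha> i j)
        * (\<Prod>i\<in>{..<s} - Jset s \<alpha> \<beta> p. Bcoef \<alpha> \<beta> p c i ^ \<alpha> i j)
        * (\<Prod>k\<in>Hset s m \<alpha> \<beta> p c - {t}.
             (Bcoef \<alpha> \<beta> p c k / \<bar>Acoef \<alpha> \<beta> p k\<bar>
              - Acoef \<alpha> \<beta> p k / \<bar>Acoef \<alpha> \<beta> p k\<bar> * (Bcoef \<alpha> \<beta> p c t / Acoef \<alpha> \<beta> p t))
             ^ gam s m \<alpha> \<beta> p c k j)) > 0)"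

text \<open>W \<inter> B \<noteq> {}, for some admissible labelling: a pivot species p with
  beta_{p1} - alpha_{p1} \<noteq> 0 that lies in H (the paper's standing labelling assumption 1 \<in> H).\<close>
definition W_meets_B :: "nat \<Rightarrow> nat \<Rightarrow> (nat \<Rightarrow> nat \<Rightarrow> nat) \<Rightarrow> (nat \<Rightarrow> nat \<Rightarrow> nat) \<Rightarrow> bool" where
  "W_meets_B s m \<alpha> \<beta> \<longleftrightarrow> (\<exists>p<s. Nm \<alpha> \<beta> p 0 \<noteq> 0 \<and> (\<exists>\<kappa> c. rate_vec m \<kappa> \<and>
      ecard (pos_ss s m \<alpha> \<beta> p \<kappa> c) = cap_pos s m \<alpha> \<beta> \<and>
      p \<in> Hset s m \<alpha> \<beta> p c \<and> in_B s m \<alpha> \<beta> p \<kappa> c))"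

end

theory Submission
  imports Defs "HOL-Computational_Algebra.Polynomial"
begin


locale net =
  fixes s m :: nat and \<alpha> \<beta> :: "nat \<Rightarrow> nat \<Rightarrow> nat"
  assumes netw: "is_network s m \<alpha> \<beta>"
    and onedim: "one_dim_stoich s m \<alpha> \<beta>"
    and a0: "Nm \<alpha> \<beta> 0 0 \<noteq> 0"
begin

abbreviation "a i \<equiv> Nm \<alpha> \<beta> i 0"

definition avec :: "nat \<Rightarrow> real" where "avec = (\<lambda>i. if i < s then a i else 0)"

lemma col_in_S:
  assumes "j < m"
  shows "(\<lambda>i. if i < s then Nm \<alpha> \<beta> i j else 0) \<in> stoich_subspace s m \<alpha> \<beta>"
proof -
  have "\<And>i. (\<Sum>j'<m. Nm \<alpha> \<beta> i j' * (if j' = j then 1 else 0)) = Nm \<alpha> \<beta> i j"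
    using assms by (simp add: if_distrib cong: if_cong)
  then show ?thesis unfolding stoich_subspace_def
    by (intro CollectI exI[of _ "\<lambda>j'. if j' = j then 1 else 0"]) auto
qed

lemma s_pos: "0 < s"
  using onedim unfolding one_dim_stoich_def by auto

lemma m_pos: "0 < m"
proof (rule ccontr)
  assume "\<not> 0 < m"
  hence m0: "m = 0" by simp
  obtain w where w: "\<exists>i<s. w i \<noteq> 0" "stoich_subspace s m \<alpha> \<beta> = {v. \<exists>t::real. v = (\<lambda>i. t * w i)}"
    using onedim unfolding one_dim_stoich_def by blast
  have "w \<in> stoich_subspace s m \<alpha> \<beta>" using w(2) by (auto intro: exI[of _ 1])
  then show False using w(1) m0 unfolding stoich_subspace_def by (auto dest: fun_cong)
qed

definition lam :: "nat \<Rightarrow> real" where "lam j = Nm \<alpha> \<beta> 0 j / a 0"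

lemma Nm_lam: assumes "i < s" "j < m" shows "Nm \<alpha> \<beta> i j = lam j * a i"
proof -
  obtain w where w: "\<exists>i<s. w i \<noteq> 0" "stoich_subspace s m \<alpha> \<beta> = {v. \<exists>t::real. v = (\<lambda>i. t * w i)}"
    using onedim unfolding one_dim_stoich_def by blast
  obtain tj where tj: "(\<lambda>i. if i < s then Nm \<alpha> \<beta> i j else 0) = (\<lambda>i. tj * w i)"
    using col_in_S[OF assms(2)] w(2) by auto
  obtain t0 where t0: "(\<lambda>i. if i < s then Nm \<alpha> \<beta> i 0 else 0) = (\<lambda>i. t0 * w i)"
    using col_in_S[OF m_pos] w(2) by auto
  have ei: "Nm \<alpha> \<beta> i j = tj * w i" "a i = t0 * w i" "Nm \<alpha> \<beta> 0 j = tj * w 0" "a 0 = t0 * w 0"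
    using fun_cong[OF tj, of i] fun_cong[OF t0, of i] fun_cong[OF tj, of 0] fun_cong[OF t0, of 0]
      assms s_pos by auto
  have "t0 \<noteq> 0" "w 0 \<noteq> 0" using a0 ei(4) by auto
  then show ?thesis unfolding lam_def using ei by (simp add: field_simps)
qed

lemma lam_nz: assumes "j < m" shows "lam j \<noteq> 0"
proof
  assume "lam j = 0"
  obtain i where "i < s" "\<alpha> i j \<noteq> \<beta> i j" using netw assms unfolding is_network_def by blast
  then have "Nm \<alpha> \<beta> i j \<noteq> 0" unfolding Nm_def by simp
  then show False using Nm_lam[OF \<open>i<s\<close> assms] \<open>lam j = 0\<close> by simp
qed

lemma S_eq: "stoich_subspace s m \<alpha> \<beta> = {v. \<exists>t. v = (\<lambda>i. t * avec i)}"
proof -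
  obtain w where w: "\<exists>i<s. w i \<noteq> 0" "stoich_subspace s m \<alpha> \<beta> = {v. \<exists>t::real. v = (\<lambda>i. t * w i)}"
    using onedim unfolding one_dim_stoich_def by blast
  obtain t0 where t0: "(\<lambda>i. if i < s then Nm \<alpha> \<beta> i 0 else 0) = (\<lambda>i. t0 * w i)"
    using col_in_S[OF m_pos] w(2) by auto
  have av: "avec = (\<lambda>i. t0 * w i)" using t0 unfolding avec_def by simp
  have "t0 \<noteq> 0" using fun_cong[OF t0, of 0] s_pos a0 by auto
  show ?thesis unfolding w(2) av
  proof (safe)
    fix t show "\<exists>t'. (\<lambda>i. t * w i) = (\<lambda>i. t' * (t0 * w i))"
      using \<open>t0 \<noteq> 0\<close> by (intro exI[of _ "t / t0"]) auto
  next
    fix t show "\<exists>t'. (\<lambda>i. t * (t0 * w i)) = (\<lambda>i. t' * w i)"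
      by (intro exI[of _ "t * t0"]) auto
  qed
qed

definition dd :: "(nat \<Rightarrow> real) \<Rightarrow> (nat \<Rightarrow> real) \<Rightarrow> nat \<Rightarrow> real" where
  "dd \<kappa> x k = (\<Sum>j<m. lam j * (\<kappa> j *
      (real (\<alpha> k j) * x k ^ (\<alpha> k j - 1) * (\<Prod>l\<in>{..<s} - {k}. x l ^ \<alpha> l j))))"

definition mu :: "(nat \<Rightarrow> real) \<Rightarrow> (nat \<Rightarrow> real) \<Rightarrow> real" where
  "mu \<kappa> x = (\<Sum>k<s. dd \<kappa> x k * a k)"

lemma jac_eq: assumes "i < s" shows "jac s m \<alpha> \<beta> \<kappa> x i k = a i * dd \<kappa> x k"
  unfolding jac_def dd_def sum_distrib_left
proof (rule sum.cong)
  fix j assume "j \<in> {..<m}"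
  then show "Nm \<alpha> \<beta> i j * (\<kappa> j * (real (\<alpha> k j) * x k ^ (\<alpha> k j - 1) * (\<Prod>l\<in>{..<s} - {k}. x l ^ \<alpha> l j))) =
    a i * (lam j * (\<kappa> j * (real (\<alpha> k j) * x k ^ (\<alpha> k j - 1) * (\<Prod>l\<in>{..<s} - {k}. x l ^ \<alpha> l j))))"
    using Nm_lam[OF assms, of j] by simp
qed simp

lemma jac_map_eq: "jac_map s m \<alpha> \<beta> \<kappa> x v = (\<lambda>i. (\<Sum>k<s. dd \<kappa> x k * v k) * avec i)"
  unfolding jac_map_def avec_def
  by (auto simp: jac_eq sum_distrib_left mult_ac)

lemma avec_nz: "avec 0 \<noteq> 0" using a0 s_pos unfolding avec_def by simp

lemma jac_map_S: "jac_map s m \<alpha> \<beta> \<kappa> x (\<lambda>i. t * avec i) = (\<lambda>i. (t * mu \<kappa> x) * avec i)"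
proof -
  have "(\<Sum>k<s. dd \<kappa> x k * (t * avec k)) = t * mu \<kappa> x"
    unfolding mu_def sum_distrib_left by (rule sum.cong) (auto simp: avec_def)
  then show ?thesis unfolding jac_map_eq by simp
qed

lemma nondeg_iff: "nondegenerate s m \<alpha> \<beta> \<kappa> x \<longleftrightarrow> mu \<kappa> x \<noteq> 0"
proof
  assume nd: "nondegenerate s m \<alpha> \<beta> \<kappa> x"
  have "avec \<in> stoich_subspace s m \<alpha> \<beta>" unfolding S_eq by (auto intro: exI[of _ 1])
  then obtain v where "v \<in> stoich_subspace s m \<alpha> \<beta>" "avec = jac_map s m \<alpha> \<beta> \<kappa> x v"
    using nd unfolding nondegenerate_def by blast
  then obtain t where "avec = (\<lambda>i. (t * mu \<kappa> x) * avec i)"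
  proof -
    assume h: "\<And>t. avec = (\<lambda>i. t * mu \<kappa> x * avec i) \<Longrightarrow> thesis"
    from \<open>v \<in> stoich_subspace s m \<alpha> \<beta>\<close> obtain t where "v = (\<lambda>i. t * avec i)" unfolding S_eq by auto
    then have "jac_map s m \<alpha> \<beta> \<kappa> x v = (\<lambda>i. (t * mu \<kappa> x) * avec i)" using jac_map_S by simp
    then show thesis using h[of t] \<open>avec = jac_map s m \<alpha> \<beta> \<kappa> x v\<close> by argo
  qed
  then have "avec 0 = (t * mu \<kappa> x) * avec 0" by metis
  then show "mu \<kappa> x \<noteq> 0" using avec_nz by auto
next
  assume "mu \<kappa> x \<noteq> 0"
  show "nondegenerate s m \<alpha> \<beta> \<kappa> x" unfolding nondegenerate_def
  proof (rule set_eqI, rule iffI)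
    fix v assume "v \<in> jac_map s m \<alpha> \<beta> \<kappa> x ` stoich_subspace s m \<alpha> \<beta>"
    then show "v \<in> stoich_subspace s m \<alpha> \<beta>" unfolding S_eq using jac_map_S by auto
  next
    fix v assume "v \<in> stoich_subspace s m \<alpha> \<beta>"
    then obtain t where v: "v = (\<lambda>i. t * avec i)" unfolding S_eq by auto
    have "v = jac_map s m \<alpha> \<beta> \<kappa> x (\<lambda>i. (t / mu \<kappa> x) * avec i)"
      unfolding jac_map_S v using \<open>mu \<kappa> x \<noteq> 0\<close> by simp
    moreover have "(\<lambda>i. (t / mu \<kappa> x) * avec i) \<in> stoich_subspace s m \<alpha> \<beta>" unfolding S_eq by blast
    ultimately show "v \<in> jac_map s m \<alpha> \<beta> \<kappa> x ` stoich_subspace s m \<alpha> \<beta>" by blast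
  qed
qed

lemma eig_eq: assumes "is_eigenvalue s (jac s m \<alpha> \<beta> \<kappa> x) z" "z \<noteq> 0"
  shows "z = complex_of_real (mu \<kappa> x)"
proof -
  obtain v where v: "\<exists>i<s. v i \<noteq> 0"
     "\<forall>i<s. (\<Sum>k<s. complex_of_real (jac s m \<alpha> \<beta> \<kappa> x i k) * v k) = z * v i"
    using assms(1) unfolding is_eigenvalue_def by blast
  define w where "w = (\<Sum>k<s. complex_of_real (dd \<kappa> x k) * v k)"
  have vi: "v i = complex_of_real (a i) * w / z" if "i < s" for i
  proof -
    have "(\<Sum>k<s. complex_of_real (jac s m \<alpha> \<beta> \<kappa> x i k) * v k) = complex_of_real (a i) * w"
      unfolding w_def sum_distrib_left by (rule sum.cong) (auto simp: jac_eq[OF that])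
    then have "z * v i = complex_of_real (a i) * w" using v(2) that by simp
    then show ?thesis using assms(2) by (simp add: eq_divide_eq mult.commute)
  qed
  have "w \<noteq> 0" using v(1) vi by auto
  have "w = (\<Sum>k<s. complex_of_real (dd \<kappa> x k) * (complex_of_real (a k) * w / z))"
  proof -
    have "w = (\<Sum>k<s. complex_of_real (dd \<kappa> x k) * v k)" by (simp add: w_def)
    also have "\<dots> = (\<Sum>k<s. complex_of_real (dd \<kappa> x k) * (complex_of_real (a k) * w / z))"
      by (rule sum.cong) (auto simp: vi)
    finally show ?thesis .
  qed
  also have "\<dots> = complex_of_real (mu \<kappa> x) * w / z"
  proof -
    have "complex_of_real (mu \<kappa> x) * w / z = (\<Sum>k<s. complex_of_real (dd \<kappa> x k * a k) * w / z)"
      unfolding mu_def of_real_sum sum_distrib_right sum_divide_distrib ..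
    then show ?thesis by (simp add: mult.assoc)
  qed
  finally have "w * z = complex_of_real (mu \<kappa> x) * w" using assms(2) by (simp add: eq_divide_eq)
  then show ?thesis using \<open>w \<noteq> 0\<close> by (simp add: mult.commute)
qed

lemma eig_mu: "is_eigenvalue s (jac s m \<alpha> \<beta> \<kappa> x) (complex_of_real (mu \<kappa> x))"
  unfolding is_eigenvalue_def
proof (intro exI[of _ "\<lambda>i. complex_of_real (avec i)"] conjI allI impI)
  show "\<exists>i<s. complex_of_real (avec i) \<noteq> 0" using avec_nz s_pos by auto
  fix i assume "i < s"
  have "(\<Sum>k<s. complex_of_real (jac s m \<alpha> \<beta> \<kappa> x i k) * complex_of_real (avec k))
        = complex_of_real (a i) * complex_of_real (mu \<kappa> x)"
    unfolding mu_def of_real_sum sum_distrib_left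
    by (rule sum.cong) (auto simp: jac_eq[OF \<open>i<s\<close>] avec_def)
  then show "(\<Sum>k<s. complex_of_real (jac s m \<alpha> \<beta> \<kappa> x i k) * complex_of_real (avec k)) =
         complex_of_real (mu \<kappa> x) * complex_of_real (avec i)"
    using \<open>i<s\<close> by (simp add: avec_def mult.commute)
qed

lemma stable_iff: "stable s m \<alpha> \<beta> \<kappa> x \<longleftrightarrow> mu \<kappa> x < 0"
proof
  assume st: "stable s m \<alpha> \<beta> \<kappa> x"
  then have "mu \<kappa> x \<noteq> 0" unfolding stable_def nondeg_iff by simp
  then show "mu \<kappa> x < 0" using st eig_mu unfolding stable_def by force
next
  assume "mu \<kappa> x < 0"
  then show "stable s m \<alpha> \<beta> \<kappa> x" unfolding stable_def nondeg_iff
    using eig_eq by fastforce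
qed


end

context net begin
subsection \<open>Parametrisation by the pivot coordinate\<close>

abbreviation "Ac p i \<equiv> Acoef \<alpha> \<beta> p i"
abbreviation "Bc p c i \<equiv> Bcoef \<alpha> \<beta> p c i"

definition Xp :: "nat \<Rightarrow> (nat \<Rightarrow> real) \<Rightarrow> real \<Rightarrow> nat \<Rightarrow> real" where
  "Xp p c t = (\<lambda>i. if i < s then Ac p i * t + Bc p c i else 0)"

definition Dom :: "nat \<Rightarrow> (nat \<Rightarrow> real) \<Rightarrow> real set" where
  "Dom p c = {t. \<forall>i<s. 0 < Ac p i * t + Bc p c i}"

definition Qpol :: "nat \<Rightarrow> (nat \<Rightarrow> real) \<Rightarrow> nat \<Rightarrow> real poly" where
  "Qpol p c j = (\<Prod>l<s. [:Bc p c l, Ac p l:] ^ \<alpha> l j)"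

definition Fpol :: "nat \<Rightarrow> (nat \<Rightarrow> real) \<Rightarrow> (nat \<Rightarrow> real) \<Rightarrow> real poly" where
  "Fpol p \<kappa> c = (\<Sum>j<m. smult (Nm \<alpha> \<beta> p j * \<kappa> j) (Qpol p c j))"

definition Roots :: "nat \<Rightarrow> (nat \<Rightarrow> real) \<Rightarrow> (nat \<Rightarrow> real) \<Rightarrow> real set" where
  "Roots p \<kappa> c = {t \<in> Dom p c. poly (Fpol p \<kappa> c) t = 0}"

definition hfun :: "(nat \<Rightarrow> real) \<Rightarrow> (nat \<Rightarrow> real) \<Rightarrow> real" where
  "hfun \<kappa> x = (\<Sum>j<m. lam j * (\<kappa> j * (\<Prod>l<s. x l ^ \<alpha> l j)))"

lemma mass_action_eq: "i < s \<Longrightarrow> mass_action s m \<alpha> \<beta> \<kappa> x i = a i * hfun \<kappa> x"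
  unfolding mass_action_def hfun_def sum_distrib_left
proof (rule sum.cong)
  fix j assume "i < s" "j \<in> {..<m}"
  then show "Nm \<alpha> \<beta> i j * (\<kappa> j * (\<Prod>l<s. x l ^ \<alpha> l j)) = a i * (lam j * (\<kappa> j * (\<Prod>l<s. x l ^ \<alpha> l j)))"
    using Nm_lam[of i j] by simp
qed simp

lemma Ac_self: "a p \<noteq> 0 \<Longrightarrow> Ac p p = 1"
  by (simp add: Acoef_def)

lemma Bc_self: "Bc p c p = 0"
  by (simp add: Bcoef_def)

lemma Xp_p: "p < s \<Longrightarrow> a p \<noteq> 0 \<Longrightarrow> Xp p c t p = t"
  by (simp add: Xp_def Ac_self Bc_self)

lemma inj_Xp: "p < s \<Longrightarrow> a p \<noteq> 0 \<Longrightarrow> inj (Xp p c)"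
  by (metis Xp_p injI)

lemma poly_Qpol: "poly (Qpol p c j) t = (\<Prod>l<s. Xp p c t l ^ \<alpha> l j)"
  unfolding Qpol_def poly_prod by (rule prod.cong) (auto simp: Xp_def poly_power algebra_simps)

lemma poly_Fpol: "poly (Fpol p \<kappa> c) t = mass_action s m \<alpha> \<beta> \<kappa> (Xp p c t) p"
  unfolding Fpol_def mass_action_def poly_sum by (simp add: poly_Qpol mult.assoc)

lemma compat_char:
  assumes "p < s" "a p \<noteq> 0"
  shows "x \<in> compat_class s m \<alpha> \<beta> p c \<longleftrightarrow> x = Xp p c (x p) \<and> (\<forall>i<s. 0 \<le> Xp p c (x p) i)"
proof
  assume x: "x \<in> compat_class s m \<alpha> \<beta> p c"
  have xi: "x i = Xp p c (x p) i" for i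
  proof (cases "i < s")
    case True
    show ?thesis
    proof (cases "i = p")
      case False
      then have "Nm \<alpha> \<beta> i 0 * x p - Nm \<alpha> \<beta> p 0 * x i = c i" using x True unfolding compat_class_def by blast
      then have "x i = Ac p i * x p + Bc p c i" using False assms(2) unfolding Acoef_def Bcoef_def
        by (simp add: field_simps)
      then show ?thesis using True unfolding Xp_def by simp
    next
      case True
      then show ?thesis using assms Xp_p[of p c "x p"] by simp
    qed
  next
    case False then show ?thesis using x unfolding compat_class_def Xp_def by simp
  qed
  have "0 \<le> Xp p c (x p) i" if "i < s" for i
  proof -
    have "0 \<le> x i" using x that unfolding compat_class_def by blast
    then show ?thesis using xi[of i] by linarith
  qed
  then show "x = Xp p c (x p) \<and> (\<forall>i<s. 0 \<le> Xp p c (x p) i)" using xi by blast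
next
  assume h: "x = Xp p c (x p) \<and> (\<forall>i<s. 0 \<le> Xp p c (x p) i)"
  have xi: "x i = Xp p c (x p) i" for i using fun_cong[OF conjunct1[OF h]] .
  show "x \<in> compat_class s m \<alpha> \<beta> p c" unfolding compat_class_def
  proof (intro CollectI conjI allI impI)
    fix i assume "i < s" then show "0 \<le> x i" using h xi[of i] by force
  next
    fix i assume "s \<le> i" then show "x i = 0" using xi[of i] unfolding Xp_def by simp
  next
    fix i assume i: "i < s" "i \<noteq> p"
    have "x i = Ac p i * x p + Bc p c i" using xi[of i] i unfolding Xp_def by simp
    then show "Nm \<alpha> \<beta> i 0 * x p - Nm \<alpha> \<beta> p 0 * x i = c i"
      using assms(2) i unfolding Acoef_def Bcoef_def by (simp add: field_simps)
  qed
qed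

lemma pos_ss_eq:
  assumes "p < s" "a p \<noteq> 0"
  shows "pos_ss s m \<alpha> \<beta> p \<kappa> c = Xp p c ` Roots p \<kappa> c"
proof (rule set_eqI)
  fix x
  have st: "(\<forall>i<s. mass_action s m \<alpha> \<beta> \<kappa> y i = 0) \<longleftrightarrow> mass_action s m \<alpha> \<beta> \<kappa> y p = 0" for y
    using assms mass_action_eq by auto
  show "x \<in> pos_ss s m \<alpha> \<beta> p \<kappa> c \<longleftrightarrow> x \<in> Xp p c ` Roots p \<kappa> c"
  proof
    assume "x \<in> pos_ss s m \<alpha> \<beta> p \<kappa> c"
    then have x: "x = Xp p c (x p)" "\<forall>i<s. 0 < x i" "mass_action s m \<alpha> \<beta> \<kappa> x p = 0"
      unfolding pos_ss_def compat_char[OF assms] using st by auto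
    have "0 < Ac p i * x p + Bc p c i" if "i < s" for i
    proof -
      have "x i = Ac p i * x p + Bc p c i" using fun_cong[OF x(1), of i] that unfolding Xp_def by simp
      then show ?thesis using x(2) that by force
    qed
    moreover have "mass_action s m \<alpha> \<beta> \<kappa> (Xp p c (x p)) p = 0" using x(3) x(1) by simp
    ultimately have "x p \<in> Roots p \<kappa> c" unfolding Roots_def Dom_def poly_Fpol by blast
    then show "x \<in> Xp p c ` Roots p \<kappa> c" using x(1) by blast
  next
    assume "x \<in> Xp p c ` Roots p \<kappa> c"
    then obtain t where t: "t \<in> Roots p \<kappa> c" "x = Xp p c t" by blast
    have xp: "x p = t" using t Xp_p assms by simp
    have "\<forall>i<s. 0 < Xp p c t i" using t unfolding Roots_def Dom_def Xp_def by simp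
    moreover have "mass_action s m \<alpha> \<beta> \<kappa> (Xp p c t) p = 0" using t unfolding Roots_def poly_Fpol by simp
    ultimately show "x \<in> pos_ss s m \<alpha> \<beta> p \<kappa> c" unfolding pos_ss_def compat_char[OF assms] xp st
      using t(2) assms by (auto simp: less_imp_le Xp_p)
  qed
qed

lemma pderiv_sum': "pderiv (sum f A) = (\<Sum>x\<in>A. pderiv (f x))"
  by (induct A rule: infinite_finite_induct) (auto simp: pderiv_add)

lemma pderiv_lin: "pderiv [:b, c:] = [:c:]"
  by (simp add: pderiv_pCons)

lemma poly_pderiv_Fpol:
  assumes "a p \<noteq> 0" "p < s"
  shows "poly (pderiv (Fpol p \<kappa> c)) t = mu \<kappa> (Xp p c t)"
proof -
  let ?x = "Xp p c t"
  have dq: "poly (pderiv (Qpol p c j)) t =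
     (\<Sum>k<s. (\<Prod>l\<in>{..<s} - {k}. ?x l ^ \<alpha> l j) * (real (\<alpha> k j) * ?x k ^ (\<alpha> k j - 1) * Ac p k))" for j
    unfolding Qpol_def pderiv_prod poly_sum
    by (rule sum.cong) (auto simp: poly_prod pderiv_power pderiv_lin poly_power Xp_def algebra_simps
        intro!: prod.cong)
  have "poly (pderiv (Fpol p \<kappa> c)) t = (\<Sum>j<m. Nm \<alpha> \<beta> p j * \<kappa> j *
     (\<Sum>k<s. (\<Prod>l\<in>{..<s} - {k}. ?x l ^ \<alpha> l j) * (real (\<alpha> k j) * ?x k ^ (\<alpha> k j - 1) * Ac p k)))"
    unfolding Fpol_def pderiv_sum' pderiv_smult poly_sum poly_smult dq ..
  also have "\<dots> = (\<Sum>j<m. \<Sum>k<s. lam j * (\<kappa> j *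
      (real (\<alpha> k j) * ?x k ^ (\<alpha> k j - 1) * (\<Prod>l\<in>{..<s} - {k}. ?x l ^ \<alpha> l j))) * a k)"
    unfolding sum_distrib_left
  proof (intro sum.cong refl)
    fix j k assume "j \<in> {..<m}" "k \<in> {..<s}"
    then have "Nm \<alpha> \<beta> p j = lam j * a p" using Nm_lam[of p j] assms by simp
    then show "Nm \<alpha> \<beta> p j * \<kappa> j * ((\<Prod>l\<in>{..<s} - {k}. ?x l ^ \<alpha> l j) * (real (\<alpha> k j) * ?x k ^ (\<alpha> k j - 1) * Ac p k)) =
      lam j * (\<kappa> j * (real (\<alpha> k j) * ?x k ^ (\<alpha> k j - 1) * (\<Prod>l\<in>{..<s} - {k}. ?x l ^ \<alpha> l j))) * a k"
      using assms(1) by (simp add: Acoef_def field_simps)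
  qed
  also have "\<dots> = mu \<kappa> ?x"
    unfolding mu_def dd_def sum_distrib_right by (rule sum.swap)
  finally show ?thesis .
qed

lemma stab_ss_eq:
  assumes "p < s" "a p \<noteq> 0"
  shows "stab_ss s m \<alpha> \<beta> p \<kappa> c = Xp p c ` {t \<in> Roots p \<kappa> c. poly (pderiv (Fpol p \<kappa> c)) t < 0}"
  unfolding stab_ss_def pos_ss_eq[OF assms] stable_iff poly_pderiv_Fpol[OF assms(2,1)] by blast

lemma ecard_image_inj: "inj f \<Longrightarrow> ecard (f ` A) = ecard A"
  unfolding ecard_def by (auto simp: card_image finite_image_iff inj_on_subset[of f UNIV])


end


lemma alt_count:
  fixes Z S :: "real set"
  assumes fin: "finite Z" and sub: "S \<subseteq> Z"
    and gap: "\<And>r1 r2. r1 \<in> S \<Longrightarrow> r2 \<in> S \<Longrightarrow> r1 < r2 \<Longrightarrow> \<exists>z\<in>Z. r1 < z \<and> z < r2"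
  shows "card S \<le> card (Z - S) + 1"
    and "Z \<noteq> {} \<Longrightarrow> Min Z \<notin> S \<Longrightarrow> card S \<le> card (Z - S)"
proof -
  have finS: "finite S" using fin sub finite_subset by blast
  show "card S \<le> card (Z - S) + 1"
  proof (cases "S = {}")
    case True then show ?thesis by simp
  next
    case False
    define f where "f r = Min {z \<in> Z. r < z}" for r
    have fprop: "f r \<in> Z - S \<and> r < f r \<and> (\<forall>z\<in>Z. r < z \<longrightarrow> f r \<le> z)" if r: "r \<in> S - {Max S}" for r
    proof -
      have "r < Max S" using r finS by (metis Diff_iff Max_ge insertCI order_le_less)
      moreover have "Max S \<in> Z" using False finS sub Max_in by blast
      ultimately have ne: "{z \<in> Z. r < z} \<noteq> {}" by blast
      have fin': "finite {z \<in> Z. r < z}" using fin by simp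
      have m1: "f r \<in> {z \<in> Z. r < z}" unfolding f_def using Min_in[OF fin' ne] .
      have m2: "\<forall>z\<in>Z. r < z \<longrightarrow> f r \<le> z" unfolding f_def using fin' by auto
      have "f r \<notin> S"
      proof
        assume "f r \<in> S"
        then obtain z where "z \<in> Z" "r < z" "z < f r" using gap[of r "f r"] r m1 by auto
        then show False using m2 by force
      qed
      then show ?thesis using m1 m2 by auto
    qed
    have "inj_on f (S - {Max S})"
    proof (rule inj_onI)
      fix x y assume xy: "x \<in> S - {Max S}" "y \<in> S - {Max S}" "f x = f y"
      show "x = y"
      proof (rule ccontr)
        assume "x \<noteq> y"
        then consider "x < y" | "y < x" by linarith
        then show False
        proof cases
          case 1
          have "f x \<le> y" using fprop[OF xy(1)] xy(2) sub 1 by auto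
          moreover have "f x \<noteq> y" using fprop[OF xy(1)] xy(2) by auto
          ultimately show False using fprop[OF xy(2)] xy(3) by auto
        next
          case 2
          have "f y \<le> x" using fprop[OF xy(2)] xy(1) sub 2 by auto
          moreover have "f y \<noteq> x" using fprop[OF xy(2)] xy(1) by auto
          ultimately show False using fprop[OF xy(1)] xy(3) by auto
        qed
      qed
    qed
    then have "card (S - {Max S}) \<le> card (Z - S)"
      by (rule card_inj_on_le) (use fprop fin in auto)
    moreover have "card (S - {Max S}) = card S - 1" using False finS by (simp add: card_Diff_singleton)
    ultimately show ?thesis by linarith
  qed
next
  assume ne: "Z \<noteq> {}" and mn: "Min Z \<notin> S"
  define g where "g r = Max {z \<in> Z. z < r}" for r
  have gprop: "g r \<in> Z - S \<and> g r < r \<and> (\<forall>z\<in>Z. z < r \<longrightarrow> z \<le> g r)" if r: "r \<in> S" for r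
  proof -
    have "Min Z \<le> r" using r sub fin by auto
    moreover have "Min Z \<noteq> r" using r mn by auto
    ultimately have ne': "{z \<in> Z. z < r} \<noteq> {}" using Min_in[OF fin ne] by force
    have fin': "finite {z \<in> Z. z < r}" using fin by simp
    have m1: "g r \<in> {z \<in> Z. z < r}" unfolding g_def using Max_in[OF fin' ne'] .
    have m2: "\<forall>z\<in>Z. z < r \<longrightarrow> z \<le> g r" unfolding g_def using fin' by auto
    have "g r \<notin> S"
    proof
      assume "g r \<in> S"
      then obtain z where "z \<in> Z" "g r < z" "z < r" using gap[of "g r" r] r m1 by auto
      then show False using m2 by force
    qed
    then show ?thesis using m1 m2 by auto
  qed
  have "inj_on g S"
  proof (rule inj_onI)
    fix x y assume xy: "x \<in> S" "y \<in> S" "g x = g y"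
    show "x = y"
    proof (rule ccontr)
      assume "x \<noteq> y"
      then consider "x < y" | "y < x" by linarith
      then show False
      proof cases
        case 1
        have "x \<le> g y" using gprop[OF xy(2)] xy(1) sub 1 by auto
        moreover have "g y \<noteq> x" using gprop[OF xy(2)] xy(1) by auto
        ultimately show False using gprop[OF xy(1)] xy(3) by auto
      next
        case 2
        have "y \<le> g x" using gprop[OF xy(1)] xy(2) sub 2 by auto
        moreover have "g x \<noteq> y" using gprop[OF xy(1)] xy(2) by auto
        ultimately show False using gprop[OF xy(2)] xy(3) by auto
      qed
    qed
  qed
  then show "card S \<le> card (Z - S)"
    by (rule card_inj_on_le) (use gprop fin in auto)
qed

definition convex_r :: "real set \<Rightarrow> bool" where
  "convex_r D \<longleftrightarrow> (\<forall>x\<in>D. \<forall>y\<in>D. \<forall>z. x \<le> z \<and> z \<le> y \<longrightarrow> z \<in> D)"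

lemma gap_neg:
  fixes P :: "real poly"
  assumes D: "convex_r D" and r: "r1 \<in> D" "r2 \<in> D" "r1 < r2"
    and z: "poly P r1 = 0" "poly P r2 = 0"
    and d: "poly (pderiv P) r1 < 0" "poly (pderiv P) r2 < 0"
  shows "\<exists>z\<in>D. r1 < z \<and> z < r2 \<and> poly P z = 0"
proof -
  obtain d1 where d1: "d1 > 0" "\<forall>h>0. h < d1 \<longrightarrow> poly P (r1 + h) < poly P r1"
    using DERIV_neg_dec_right[OF poly_DERIV d(1)] by blast
  obtain d2 where d2: "d2 > 0" "\<forall>h>0. h < d2 \<longrightarrow> poly P r2 < poly P (r2 - h)"
    using DERIV_neg_dec_left[OF poly_DERIV d(2)] by blast
  define h where "h = min (min d1 d2) (r2 - r1) / 3"
  have mm: "min (min d1 d2) (r2 - r1) \<le> d1" "min (min d1 d2) (r2 - r1) \<le> d2"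
    "min (min d1 d2) (r2 - r1) \<le> r2 - r1" "min (min d1 d2) (r2 - r1) > 0" using d1 d2 r by auto
  have h: "h > 0" "h < d1" "h < d2" "r1 + h < r2 - h"
    using mm d1 d2 r unfolding h_def by linarith+
  have "poly P (r1 + h) < 0" "0 < poly P (r2 - h)" using d1 d2 h z by auto
  then obtain z where "r1 + h < z" "z < r2 - h" "poly P z = 0"
    using poly_IVT_pos[of "r1 + h" "r2 - h" P] h by auto
  moreover have "r1 \<le> z" "z \<le> r2" using calculation h by linarith+
  moreover have "z \<in> D" using D r(1,2) calculation(4,5) unfolding convex_r_def by blast
  moreover have "r1 < z" "z < r2" using calculation h by linarith+
  ultimately show ?thesis by blast
qed

lemma gap_pos:
  fixes P :: "real poly"
  assumes D: "convex_r D" and r: "r1 \<in> D" "r2 \<in> D" "r1 < r2"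
    and z: "poly P r1 = 0" "poly P r2 = 0"
    and d: "poly (pderiv P) r1 > 0" "poly (pderiv P) r2 > 0"
  shows "\<exists>z\<in>D. r1 < z \<and> z < r2 \<and> poly P z = 0"
proof -
  have "poly (- P) r1 = 0" "poly (- P) r2 = 0" "poly (pderiv (- P)) r1 < 0" "poly (pderiv (- P)) r2 < 0"
    using z d by (simp_all add: pderiv_minus)
  from gap_neg[OF D r this] show ?thesis by simp
qed



lemma bad_finite:
  fixes P Q :: "real poly" and D :: "real set"
  assumes Qpos: "\<And>t. t \<in> D \<Longrightarrow> poly Q t > 0"
    and z: "z \<in> D" "poly P z = 0" and r: "r > 0" "\<forall>y. \<bar>y - z\<bar> < r \<longrightarrow> y \<in> D"
    and fin: "finite {t \<in> D. poly P t = 0}"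
  shows "finite {\<epsilon>. \<exists>t\<in>D. poly (P + smult \<epsilon> Q) t = 0 \<and> poly (pderiv (P + smult \<epsilon> Q)) t = 0}"
proof -
  define Wp where "Wp = pderiv P * Q - P * pderiv Q"
  show ?thesis
  proof (cases "Wp = 0")
    case False
    have "{\<epsilon>. \<exists>t\<in>D. poly (P + smult \<epsilon> Q) t = 0 \<and> poly (pderiv (P + smult \<epsilon> Q)) t = 0}
        \<subseteq> (\<lambda>t. - poly P t / poly Q t) ` {t. poly Wp t = 0}"
    proof
      fix \<epsilon> assume "\<epsilon> \<in> {\<epsilon>. \<exists>t\<in>D. poly (P + smult \<epsilon> Q) t = 0 \<and> poly (pderiv (P + smult \<epsilon> Q)) t = 0}"
      then obtain t where t: "t \<in> D" "poly P t + \<epsilon> * poly Q t = 0"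
          "poly (pderiv P) t + \<epsilon> * poly (pderiv Q) t = 0"
        by (auto simp: pderiv_add pderiv_smult)
      have q: "poly Q t > 0" using Qpos t(1) by auto
      have e: "\<epsilon> = - poly P t / poly Q t" using t(2) q by (simp add: field_simps)
      have p1: "poly P t = - \<epsilon> * poly Q t" "poly (pderiv P) t = - \<epsilon> * poly (pderiv Q) t"
        using t by linarith+
      have "poly Wp t = 0" unfolding Wp_def by (simp add: p1)
      then show "\<epsilon> \<in> (\<lambda>t. - poly P t / poly Q t) ` {t. poly Wp t = 0}" using e by blast
    qed
    moreover have "finite {t. poly Wp t = 0}" using poly_roots_finite[OF False] .
    ultimately show ?thesis using finite_subset by blast
  next
    case True
    define f where "f x = poly P x / poly Q x" for x
    have "poly P x = 0" if x: "z < x" "x < z + r" for x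
    proof -
      have inD: "y \<in> D" if "z \<le> y" "y \<le> x" for y using r that x by auto
      have "continuous_on {z..x} f" unfolding f_def
        by (intro continuous_intros) (use inD Qpos in force)
      moreover have "DERIV f y :> 0" if "z < y" "y < x" for y
      proof -
        have "y \<in> D" using inD[of y] that by auto
        then have "poly Q y \<noteq> 0" using Qpos by force
        then have "DERIV f y :> (poly (pderiv P) y * poly Q y - poly P y * poly (pderiv Q) y) / (poly Q y * poly Q y)"
          unfolding f_def by (intro DERIV_divide poly_DERIV)
        moreover have "poly (pderiv P) y * poly Q y - poly P y * poly (pderiv Q) y = 0"
          using arg_cong[OF True, of "\<lambda>W. poly W y"] unfolding Wp_def by simp
        ultimately show ?thesis by simp
      qed
      ultimately have "f x = f z" using DERIV_isconst_end[of z x f] x by blast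
      then have "poly P x / poly Q x = 0" unfolding f_def using z by simp
      moreover have "poly Q x > 0" using Qpos inD x by force
      ultimately show ?thesis by simp
    qed
    then have "{z<..<z + r} \<subseteq> {t \<in> D. poly P t = 0}" using r by auto
    moreover have "infinite {z<..<z + r}" using r by simp
    ultimately show ?thesis using fin finite_subset by blast
  qed
qed

lemma same_sign: "(x::real) * y > 0 \<Longrightarrow> (x > 0 \<longleftrightarrow> y > 0) \<and> (x < 0 \<longleftrightarrow> y < 0)"
  by (auto simp: zero_less_mult_iff)

lemma sign_keep:
  fixes p q e :: real
  assumes "q > 0" "p \<noteq> 0" "\<bar>e\<bar> < \<bar>p\<bar> / q"
  shows "(p + e * q) * p > 0"
proof -
  have "\<bar>e\<bar> * q < \<bar>p\<bar>" using assms by (simp add: field_simps)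
  moreover have "\<bar>p\<bar> > 0" using assms(2) by simp
  ultimately have "\<bar>e\<bar> * q * \<bar>p\<bar> < \<bar>p\<bar> * \<bar>p\<bar>" by (rule mult_strict_right_mono)
  moreover have "\<bar>e * q * p\<bar> = \<bar>e\<bar> * q * \<bar>p\<bar>" using assms(1) by (simp add: abs_mult)
  moreover have "\<bar>p\<bar> * \<bar>p\<bar> = p * p" by (simp add: abs_mult[symmetric])
  ultimately have "- (e * q * p) < p * p" by linarith
  then show ?thesis by (simp add: algebra_simps)
qed

lemma perturb:
  fixes P Q :: "real poly" and D :: "real set" and N :: nat
  assumes openD: "\<And>z. z \<in> D \<Longrightarrow> \<exists>r>0. \<forall>y. \<bar>y - z\<bar> < r \<longrightarrow> y \<in> D"
    and Qpos: "\<And>t. t \<in> D \<Longrightarrow> poly Q t > 0"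
    and finZ: "finite {t \<in> D. poly P t = 0}" and cardZ: "card {t \<in> D. poly P t = 0} = N"
    and N1: "N \<ge> 1"
    and e: "e > 0"
    and maxh: "\<And>\<epsilon>. \<bar>\<epsilon>\<bar> < e \<Longrightarrow> finite {t \<in> D. poly (P + smult \<epsilon> Q) t = 0} \<and>
                     card {t \<in> D. poly (P + smult \<epsilon> Q) t = 0} \<le> N"
    and e0: "e0 > 0"
  shows "\<exists>\<epsilon>. 0 < \<epsilon> \<and> \<epsilon> < e0 \<and> card {t \<in> D. poly (P + smult \<epsilon> Q) t = 0} = N \<and>
           (\<forall>t\<in>D. poly (P + smult \<epsilon> Q) t = 0 \<longrightarrow> poly (pderiv (P + smult \<epsilon> Q)) t \<noteq> 0)"
proof -
  define Z0 where "Z0 = {t \<in> D. poly P t = 0}"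
  define Ze where "Ze \<epsilon> = {t \<in> D. poly (P + smult \<epsilon> Q) t = 0}" for \<epsilon>
  have cZ0: "card Z0 = N" using cardZ unfolding Z0_def .
  have Z0ne: "Z0 \<noteq> {}"
  proof
    assume "Z0 = {}" then have "N = 0" using cZ0 by simp
    then show False using N1 by simp
  qed
  have finZ0: "finite Z0" using finZ unfolding Z0_def .
  have "\<forall>z\<in>Z0. \<exists>r. r > 0 \<and> (\<forall>y. \<bar>y - z\<bar> < r \<longrightarrow> y \<in> D)"
    using openD unfolding Z0_def by blast
  from bchoice[OF this] obtain R where R0: "\<forall>z\<in>Z0. R z > 0 \<and> (\<forall>y. \<bar>y - z\<bar> < R z \<longrightarrow> y \<in> D)"
    by blast
  have R: "R z > 0 \<and> (\<forall>y. \<bar>y - z\<bar> < R z \<longrightarrow> y \<in> D)" if "z \<in> Z0" for z using R0 that by blast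
  define Dist where "Dist = (\<lambda>(z, z'). \<bar>z - z'\<bar>) ` {(z, z'). z \<in> Z0 \<and> z' \<in> Z0 \<and> z \<noteq> z'}"
  have finDist: "finite Dist" unfolding Dist_def
    by (rule finite_imageI, rule finite_subset[of _ "Z0 \<times> Z0"]) (use finZ0 in auto)
  define d0 where "d0 = Min (R ` Z0 \<union> Dist)"
  have d0pos: "d0 > 0" unfolding d0_def using finZ0 finDist Z0ne R
    by (subst Min_gr_iff) (auto simp: Dist_def)
  have d0R: "d0 \<le> R z" if "z \<in> Z0" for z unfolding d0_def using finZ0 finDist that by auto
  have d0D: "d0 \<le> \<bar>z - z'\<bar>" if "z \<in> Z0" "z' \<in> Z0" "z \<noteq> z'" for z z'
    unfolding d0_def using finZ0 finDist that by (intro Min_le) (auto simp: Dist_def)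
  define \<delta> where "\<delta> = d0 / 3"
  have \<delta>pos: "\<delta> > 0" using d0pos unfolding \<delta>_def by simp
  have inD: "y \<in> D" if "z \<in> Z0" "\<bar>y - z\<bar> \<le> \<delta>" for y z
    using R[OF that(1)] d0R[OF that(1)] that(2) d0pos unfolding \<delta>_def by auto
  have farr: "\<bar>y - z'\<bar> > \<delta>" if "z \<in> Z0" "z' \<in> Z0" "z \<noteq> z'" "\<bar>y - z\<bar> \<le> \<delta>" for y z z'
    using d0D[OF that(1-3)] that(4) d0pos unfolding \<delta>_def by linarith
  define u where "u z = z - \<delta>" for z
  define v where "v z = z + \<delta>" for z
  have uv_nz: "poly P (u z) \<noteq> 0 \<and> poly P (v z) \<noteq> 0 \<and> u z \<in> D \<and> v z \<in> D" if "z \<in> Z0" for z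
  proof -
    have "u z \<in> D" "v z \<in> D" using inD[OF that] \<delta>pos unfolding u_def v_def by auto
    moreover have "poly P (u z) \<noteq> 0"
    proof
      assume "poly P (u z) = 0"
      then have "u z \<in> Z0" using \<open>u z \<in> D\<close> unfolding Z0_def by simp
      moreover have "u z \<noteq> z" using \<delta>pos unfolding u_def by simp
      ultimately show False using farr[OF that \<open>u z \<in> Z0\<close>, of z] \<delta>pos unfolding u_def by auto
    qed
    moreover have "poly P (v z) \<noteq> 0"
    proof
      assume "poly P (v z) = 0"
      then have "v z \<in> Z0" using \<open>v z \<in> D\<close> unfolding Z0_def by simp
      moreover have "v z \<noteq> z" using \<delta>pos unfolding v_def by simp
      ultimately show False using farr[OF that \<open>v z \<in> Z0\<close>, of z] \<delta>pos unfolding v_def by auto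
    qed
    ultimately show ?thesis by blast
  qed
  define E where "E = u ` Z0 \<union> v ` Z0"
  have finE: "finite E" "E \<noteq> {}" unfolding E_def using finZ0 Z0ne by auto
  have E_prop: "w \<in> D \<and> poly P w \<noteq> 0" if "w \<in> E" for w using that uv_nz unfolding E_def by auto
  define e1 where "e1 = Min ((\<lambda>w. \<bar>poly P w\<bar> / poly Q w) ` E)"
  have e1pos: "e1 > 0" unfolding e1_def using finE E_prop Qpos
    by (subst Min_gr_iff) auto
  have keep: "poly (P + smult \<epsilon> Q) w * poly P w > 0" if "w \<in> E" "\<bar>\<epsilon>\<bar> < e1" for w \<epsilon>
  proof -
    have "e1 \<le> \<bar>poly P w\<bar> / poly Q w" unfolding e1_def using finE that(1) by auto
    then show ?thesis using sign_keep[of "poly Q w" "poly P w" \<epsilon>] E_prop[OF that(1)] Qpos that(2) by auto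
  qed
  define C where "C = {z \<in> Z0. poly P (u z) * poly P (v z) < 0}"
  define Tm where "Tm = {z \<in> Z0. poly P (u z) < 0 \<and> poly P (v z) < 0}"
  define Tp where "Tp = {z \<in> Z0. poly P (u z) > 0 \<and> poly P (v z) > 0}"
  have part: "card Z0 = card C + card Tm + card Tp"
  proof -
    have "Z0 = (C \<union> Tm) \<union> Tp" unfolding C_def Tm_def Tp_def using uv_nz
      by (auto simp: mult_less_0_iff) (metis linorder_neqE_linordered_idom)+
    moreover have "finite C" "finite Tm" "finite Tp" using finZ0 unfolding C_def Tm_def Tp_def by auto
    moreover have "C \<inter> Tm = {}" "(C \<union> Tm) \<inter> Tp = {}" unfolding C_def Tm_def Tp_def
      by (auto simp: mult_less_0_iff)
    ultimately show ?thesis by (simp add: card_Un_disjoint)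
  qed
  define e2 where "e2 = min e1 e"
  have e2pos: "e2 > 0" using e1pos e unfolding e2_def by simp
  have lower: "card C + 2 * card (if \<epsilon> > 0 then Tm else Tp) \<le> card (Ze \<epsilon>)"
    if eps: "\<epsilon> \<noteq> 0" "\<bar>\<epsilon>\<bar> < e2" for \<epsilon>
  proof -
    let ?P = "P + smult \<epsilon> Q"
    let ?T = "if \<epsilon> > 0 then Tm else Tp"
    have finZe: "finite (Ze \<epsilon>)" using maxh[of \<epsilon>] eps unfolding e2_def Ze_def by auto
    have ke: "poly ?P w * poly P w > 0" if "w \<in> E" for w using keep[OF that] eps unfolding e2_def by auto
    have uE: "u z \<in> E" and vE: "v z \<in> E" if "z \<in> Z0" for z using that unfolding E_def by auto
    define W where "W z = Ze \<epsilon> \<inter> {u z<..<v z}" for z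
    have Wsub: "W z \<subseteq> Ze \<epsilon>" for z unfolding W_def by auto
    have finW: "finite (W z)" for z using finite_subset[OF Wsub finZe] .
    have rootW: "x \<in> W z" if "z \<in> Z0" "u z < x" "x < v z" "poly ?P x = 0" for x z
    proof -
      have "\<bar>x - z\<bar> \<le> \<delta>" using that unfolding u_def v_def by auto
      then have "x \<in> D" using inD[OF that(1)] by blast
      then show ?thesis using that unfolding W_def Ze_def by auto
    qed
    have WC: "card (W z) \<ge> 1" if "z \<in> C" for z
    proof -
      have z: "z \<in> Z0" using that unfolding C_def by auto
      have s1: "(poly ?P (u z) > 0 \<longleftrightarrow> poly P (u z) > 0) \<and> (poly ?P (u z) < 0 \<longleftrightarrow> poly P (u z) < 0)"
        using same_sign[OF ke[OF uE[OF z]]] .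
      have s2: "(poly ?P (v z) > 0 \<longleftrightarrow> poly P (v z) > 0) \<and> (poly ?P (v z) < 0 \<longleftrightarrow> poly P (v z) < 0)"
        using same_sign[OF ke[OF vE[OF z]]] .
      have "poly ?P (u z) * poly ?P (v z) < 0"
        using that s1 s2 unfolding C_def by (auto simp: mult_less_0_iff)
      moreover have "u z < v z" using \<delta>pos unfolding u_def v_def by simp
      ultimately obtain x where "u z < x" "x < v z" "poly ?P x = 0" using poly_IVT by blast
      then have "W z \<noteq> {}" using rootW[OF z] by blast
      then show ?thesis using finW[of z] by (simp add: Suc_le_eq card_gt_0_iff)
    qed
    have WT: "card (W z) \<ge> 2" if "z \<in> ?T" for z
    proof -
      have z: "z \<in> Z0" using that unfolding Tm_def Tp_def by (auto split: if_splits)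
      have s1: "(poly ?P (u z) > 0 \<longleftrightarrow> poly P (u z) > 0) \<and> (poly ?P (u z) < 0 \<longleftrightarrow> poly P (u z) < 0)"
        using same_sign[OF ke[OF uE[OF z]]] .
      have s2: "(poly ?P (v z) > 0 \<longleftrightarrow> poly P (v z) > 0) \<and> (poly ?P (v z) < 0 \<longleftrightarrow> poly P (v z) < 0)"
        using same_sign[OF ke[OF vE[OF z]]] .
      have Pz: "poly P z = 0" using z unfolding Z0_def by simp
      have Qz: "poly Q z > 0" using z Qpos unfolding Z0_def by simp
      have pz: "poly ?P z = \<epsilon> * poly Q z" using Pz by simp
      have "poly ?P (u z) * poly ?P z < 0 \<and> poly ?P z * poly ?P (v z) < 0"
      proof (cases "\<epsilon> > 0")
        case True
        then have "poly ?P z > 0" using pz Qz by simp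
        moreover have "poly ?P (u z) < 0" "poly ?P (v z) < 0" using that True s1 s2 unfolding Tm_def by auto
        ultimately show ?thesis by (auto simp: mult_less_0_iff)
      next
        case False
        then have "\<epsilon> < 0" using eps by simp
        then have "poly ?P z < 0" using pz Qz by (simp add: mult_neg_pos)
        moreover have "poly ?P (u z) > 0" "poly ?P (v z) > 0" using that False s1 s2 unfolding Tp_def by auto
        ultimately show ?thesis by (auto simp: mult_less_0_iff)
      qed
      moreover have "u z < z" "z < v z" using \<delta>pos unfolding u_def v_def by auto
      ultimately obtain x1 x2 where x: "u z < x1" "x1 < z" "poly ?P x1 = 0" "z < x2" "x2 < v z" "poly ?P x2 = 0"
        using poly_IVT[of "u z" z ?P] poly_IVT[of z "v z" ?P] by blast
      have "{x1, x2} \<subseteq> W z" using rootW[OF z] x by auto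
      moreover have "card {x1, x2} = 2" using x by auto
      ultimately show ?thesis using card_mono[OF finW] by metis
    qed
    have disj: "W z \<inter> W z' = {}" if "z \<in> Z0" "z' \<in> Z0" "z \<noteq> z'" for z z'
    proof (rule ccontr)
      assume "W z \<inter> W z' \<noteq> {}"
      then obtain y where "y \<in> W z" "y \<in> W z'" by blast
      then have "\<bar>y - z\<bar> \<le> \<delta>" "\<bar>y - z'\<bar> \<le> \<delta>" unfolding W_def u_def v_def by auto
      then show False using farr[OF that] by force
    qed
    have "card (\<Union>z\<in>Z0. W z) = (\<Sum>z\<in>Z0. card (W z))"
      by (rule card_UN_disjoint) (use finZ0 finW disj in auto)
    moreover have "card (\<Union>z\<in>Z0. W z) \<le> card (Ze \<epsilon>)"
      by (rule card_mono[OF finZe]) (use Wsub in auto)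
    moreover have "(\<Sum>z\<in>C \<union> ?T. card (W z)) \<le> (\<Sum>z\<in>Z0. card (W z))"
      by (rule sum_mono2[OF finZ0]) (auto simp: C_def Tm_def Tp_def)
    moreover have "(\<Sum>z\<in>C \<union> ?T. card (W z)) = (\<Sum>z\<in>C. card (W z)) + (\<Sum>z\<in>?T. card (W z))"
      by (rule sum.union_disjoint) (use finZ0 in \<open>auto simp: C_def Tm_def Tp_def mult_less_0_iff\<close>)
    moreover have "(\<Sum>z\<in>C. card (W z)) \<ge> (\<Sum>z\<in>C. 1)" by (rule sum_mono) (use WC in auto)
    moreover have "(\<Sum>z\<in>?T. card (W z)) \<ge> (\<Sum>z\<in>?T. 2)" by (rule sum_mono) (use WT in auto)
    ultimately show ?thesis by simp
  qed
  have "card Tm \<le> card Tp"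
  proof -
    have "card C + 2 * card Tm \<le> card (Ze (e2 / 2))" using lower[of "e2/2"] e2pos by simp
    moreover have "card (Ze (e2 / 2)) \<le> N" using maxh[of "e2/2"] e2pos unfolding e2_def Ze_def by auto
    ultimately show ?thesis using part cardZ unfolding Z0_def by linarith
  qed
  moreover have "card Tp \<le> card Tm"
  proof -
    have "card C + 2 * card Tp \<le> card (Ze (- e2 / 2))" using lower[of "- e2/2"] e2pos by simp
    moreover have "card (Ze (- e2 / 2)) \<le> N" using maxh[of "- e2/2"] e2pos unfolding e2_def Ze_def by auto
    ultimately show ?thesis using part cardZ unfolding Z0_def by linarith
  qed
  ultimately have low: "card (Ze \<epsilon>) \<ge> N" if "0 < \<epsilon>" "\<epsilon> < e2" for \<epsilon>
    using lower[of \<epsilon>] that part cardZ unfolding Z0_def by auto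
  obtain z where z: "z \<in> Z0" using Z0ne by blast
  obtain r where r: "r > 0" "\<forall>y. \<bar>y - z\<bar> < r \<longrightarrow> y \<in> D" using R[OF z] by blast
  define Bad where "Bad = {\<epsilon>. \<exists>t\<in>D. poly (P + smult \<epsilon> Q) t = 0 \<and> poly (pderiv (P + smult \<epsilon> Q)) t = 0}"
  have finBad: "finite Bad" unfolding Bad_def
    by (rule bad_finite[OF Qpos _ _ r finZ]) (use z in \<open>auto simp: Z0_def\<close>)
  define e3 where "e3 = min e0 e2"
  have "e3 > 0" using e0 e2pos unfolding e3_def by simp
  then have "infinite {0<..<e3}" by simp
  have "\<not> {0<..<e3} \<subseteq> Bad" using finBad finite_subset \<open>infinite {0<..<e3}\<close> by blast
  then obtain \<epsilon> where eps: "\<epsilon> \<in> {0<..<e3}" "\<epsilon> \<notin> Bad" by blast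
  have "card (Ze \<epsilon>) \<le> N" using maxh[of \<epsilon>] eps unfolding e3_def e2_def Ze_def by auto
  moreover have "card (Ze \<epsilon>) \<ge> N" using low[of \<epsilon>] eps unfolding e3_def by auto
  ultimately show ?thesis using eps unfolding Ze_def Bad_def e3_def by (intro exI[of _ \<epsilon>]) auto
qed



lemma chg_alg1:
  fixes ap aq ai xp xq xi cq ci :: real
  assumes "ap \<noteq> 0" "ai * xp - ap * xi = ci" "aq * xp - ap * xq = cq"
  shows "ai * xq - aq * xi = (aq * ci - ai * cq) / ap"
proof -
  have e: "ap * xq = aq * xp - cq" "ap * xi = ai * xp - ci" using assms(2,3) by linarith+
  have "ap * (ai * xq - aq * xi) = ai * (ap * xq) - aq * (ap * xi)" by (simp add: algebra_simps)
  also have "\<dots> = ai * (aq * xp - cq) - aq * (ai * xp - ci)" by (simp only: e)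
  also have "\<dots> = aq * ci - ai * cq" by (simp add: algebra_simps)
  finally have "ap * (ai * xq - aq * xi) = aq * ci - ai * cq" .
  then show ?thesis using assms(1) by (simp add: eq_divide_eq mult.commute)
qed

lemma chg_alg2:
  fixes ap aq ai xp xq xi cq ci di :: real
  assumes "aq \<noteq> 0" "ai * xq - aq * xi = di" "ap * di = aq * ci - ai * cq" "ap * xq - aq * xp = - cq"
  shows "ai * xp - ap * xi = ci"
proof -
  have e: "aq * xi = ai * xq - di" "ap * xq = aq * xp - cq" using assms(2,4) by linarith+
  have "aq * (ai * xp - ap * xi - ci) = ai * aq * xp - ap * (aq * xi) - aq * ci" by (simp add: algebra_simps)
  also have "\<dots> = ai * aq * xp - ap * (ai * xq - di) - aq * ci" by (simp only: e)
  also have "\<dots> = ai * aq * xp - ai * (ap * xq) + ap * di - aq * ci" by (simp add: algebra_simps)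
  also have "\<dots> = ai * aq * xp - ai * (aq * xp - cq) + (aq * ci - ai * cq) - aq * ci" by (simp only: e assms(3))
  also have "\<dots> = 0" by (simp add: algebra_simps)
  finally have "aq * (ai * xp - ap * xi - ci) = 0" .
  then show ?thesis using assms(1) by simp
qed

context net begin

definition hat :: "nat \<Rightarrow> (nat \<Rightarrow> real) \<Rightarrow> nat \<Rightarrow> real" where
  "hat p c i = (if i = p then 0 else c i)"

definition chg :: "nat \<Rightarrow> nat \<Rightarrow> (nat \<Rightarrow> real) \<Rightarrow> nat \<Rightarrow> real" where
  "chg p q c i = (a q * hat p c i - a i * hat p c q) / a p"

lemma compat_hat:
  "x \<in> compat_class s m \<alpha> \<beta> p c \<longleftrightarrow> (\<forall>i<s. x i \<ge> 0) \<and> (\<forall>i. s \<le> i \<longrightarrow> x i = 0) \<and>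
      (\<forall>i<s. a i * x p - a p * x i = hat p c i)"
  unfolding compat_class_def hat_def by auto

lemma compat_chg:
  assumes "p < s" "q < s" "a p \<noteq> 0" "a q \<noteq> 0"
  shows "compat_class s m \<alpha> \<beta> p c = compat_class s m \<alpha> \<beta> q (chg p q c)"
proof -
  have hq: "hat q (chg p q c) i = chg p q c i" for i
    unfolding hat_def chg_def by auto
  have "(\<forall>i<s. a i * x p - a p * x i = hat p c i) \<longleftrightarrow> (\<forall>i<s. a i * x q - a q * x i = chg p q c i)" for x
  proof
    assume h: "\<forall>i<s. a i * x p - a p * x i = hat p c i"
    show "\<forall>i<s. a i * x q - a q * x i = chg p q c i"
    proof (intro allI impI)
      fix i assume "i < s"
      show "a i * x q - a q * x i = chg p q c i"
        unfolding chg_def by (rule chg_alg1[OF assms(3)]) (use h \<open>i<s\<close> assms in auto)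
    qed
  next
    assume h: "\<forall>i<s. a i * x q - a q * x i = chg p q c i"
    have hp: "a p * x q - a q * x p = - hat p c q"
      using h[rule_format, OF assms(1)] assms(3) unfolding chg_def by (simp add: hat_def)
    show "\<forall>i<s. a i * x p - a p * x i = hat p c i"
    proof (intro allI impI)
      fix i assume "i < s"
      show "a i * x p - a p * x i = hat p c i"
        by (rule chg_alg2[OF assms(4) h[rule_format, OF \<open>i<s\<close>] _ hp])
          (use assms(3) in \<open>simp add: chg_def\<close>)
    qed
  qed
  note equiv = this
  show ?thesis
  proof (rule set_eqI)
    fix x
    have eq: "(\<forall>i<s. a i * x q - a q * x i = hat q (chg p q c) i) \<longleftrightarrow> (\<forall>i<s. a i * x q - a q * x i = chg p q c i)"
      by (simp add: hq)
    show "x \<in> compat_class s m \<alpha> \<beta> p c \<longleftrightarrow> x \<in> compat_class s m \<alpha> \<beta> q (chg p q c)"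
      unfolding compat_hat using equiv[of x] eq by blast
  qed
qed

lemma pos_ss_chg:
  assumes "p < s" "q < s" "a p \<noteq> 0" "a q \<noteq> 0"
  shows "pos_ss s m \<alpha> \<beta> p \<kappa> c = pos_ss s m \<alpha> \<beta> q \<kappa> (chg p q c)"
  unfolding pos_ss_def compat_chg[OF assms] ..

lemma stab_ss_chg:
  assumes "p < s" "q < s" "a p \<noteq> 0" "a q \<noteq> 0"
  shows "stab_ss s m \<alpha> \<beta> p \<kappa> c = stab_ss s m \<alpha> \<beta> q \<kappa> (chg p q c)"
  unfolding stab_ss_def pos_ss_chg[OF assms] ..

lemma cap_pos_ge:
  assumes "p < s" "a p \<noteq> 0" "rate_vec m \<kappa>"
  shows "ecard (pos_ss s m \<alpha> \<beta> p \<kappa> c) \<le> cap_pos s m \<alpha> \<beta>"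
proof -
  have "pos_ss s m \<alpha> \<beta> p \<kappa> c = pos_ss s m \<alpha> \<beta> 0 \<kappa> (chg p 0 c)"
    using pos_ss_chg[OF assms(1) s_pos assms(2) a0] .
  then show ?thesis unfolding cap_pos_def using assms(3) by (auto intro!: Sup_upper)
qed

lemma cap_stab_ge:
  assumes "p < s" "a p \<noteq> 0" "rate_vec m \<kappa>"
  shows "ecard (stab_ss s m \<alpha> \<beta> p \<kappa> c) \<le> cap_stab s m \<alpha> \<beta>"
proof -
  have "stab_ss s m \<alpha> \<beta> p \<kappa> c = stab_ss s m \<alpha> \<beta> 0 \<kappa> (chg p 0 c)"
    using stab_ss_chg[OF assms(1) s_pos assms(2) a0] .
  then show ?thesis unfolding cap_stab_def using assms(3) by (auto intro!: Sup_upper)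
qed

lemma Dom_open:
  assumes "z \<in> Dom p c"
  shows "\<exists>r>0. \<forall>y. \<bar>y - z\<bar> < r \<longrightarrow> y \<in> Dom p c"
proof -
  define rr where "rr i = (Ac p i * z + Bc p c i) / (\<bar>Ac p i\<bar> + 1)" for i
  define r where "r = Min (rr ` {..<s})"
  have rrpos: "rr i > 0" if "i < s" for i
    using assms that unfolding rr_def Dom_def by (auto intro!: divide_pos_pos)
  have rpos: "r > 0" unfolding r_def using rrpos s_pos by (subst Min_gr_iff) auto
  have rle: "r \<le> rr i" if "i < s" for i unfolding r_def using that by auto
  have "y \<in> Dom p c" if y: "\<bar>y - z\<bar> < r" for y
    unfolding Dom_def
  proof (intro CollectI allI impI)
    fix i assume i: "i < s"
    have "\<bar>y - z\<bar> < rr i" using y rle[OF i] by linarith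
    then have "\<bar>y - z\<bar> * (\<bar>Ac p i\<bar> + 1) < Ac p i * z + Bc p c i"
      unfolding rr_def by (simp add: pos_less_divide_eq add_pos_nonneg)
    moreover have "\<bar>Ac p i * (y - z)\<bar> \<le> \<bar>y - z\<bar> * (\<bar>Ac p i\<bar> + 1)"
    proof -
      have "\<bar>Ac p i * (y - z)\<bar> = \<bar>Ac p i\<bar> * \<bar>y - z\<bar>" by (rule abs_mult)
      moreover have "\<bar>y - z\<bar> * (\<bar>Ac p i\<bar> + 1) = \<bar>Ac p i\<bar> * \<bar>y - z\<bar> + \<bar>y - z\<bar>" by (simp add: algebra_simps)
      ultimately show ?thesis by simp
    qed
    moreover have "Ac p i * y + Bc p c i = (Ac p i * z + Bc p c i) + Ac p i * (y - z)"
      by (simp add: algebra_simps)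
    ultimately show "0 < Ac p i * y + Bc p c i" by linarith
  qed
  then show ?thesis using rpos by blast
qed

lemma Dom_convex: "convex_r (Dom p c)"
  unfolding convex_r_def Dom_def
proof (intro ballI allI impI CollectI)
  fix x y z i assume x: "x \<in> {t. \<forall>i<s. 0 < Ac p i * t + Bc p c i}" and y: "y \<in> {t. \<forall>i<s. 0 < Ac p i * t + Bc p c i}"
    and z: "x \<le> z \<and> z \<le> y" and i: "i < s"
  have "0 < Ac p i * x + Bc p c i" "0 < Ac p i * y + Bc p c i" using x y i by auto
  moreover have "Ac p i * x \<le> Ac p i * z \<or> Ac p i * y \<le> Ac p i * z"
  proof (cases "Ac p i \<ge> 0")
    case True then show ?thesis using z mult_left_mono[of x z "Ac p i"] by simp
  next
    case False then show ?thesis using z mult_left_mono_neg[of z y "Ac p i"] by simp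
  qed
  ultimately show "0 < Ac p i * z + Bc p c i" by linarith
qed

end


context net begin

abbreviation "J p \<equiv> Jset s \<alpha> \<beta> p"
abbreviation "CL p c i \<equiv> cls s \<alpha> \<beta> p c i"

definition rep :: "nat \<Rightarrow> (nat \<Rightarrow> real) \<Rightarrow> nat \<Rightarrow> nat" where
  "rep p c i = (if p \<in> CL p c i then p else Min (CL p c i))"

definition Rset :: "nat \<Rightarrow> (nat \<Rightarrow> real) \<Rightarrow> nat set" where
  "Rset p c = {k. is_rep s \<alpha> \<beta> p c k} \<inter> J p"

definition ratio :: "nat \<Rightarrow> (nat \<Rightarrow> real) \<Rightarrow> nat \<Rightarrow> real" where
  "ratio p c i = Bc p c i / Ac p i"

lemma J_sub: "J p \<subseteq> {..<s}" unfolding Jset_def by auto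

lemma finite_J: "finite (J p)" by (rule finite_subset[OF J_sub]) simp

lemma cls_J: "i \<in> J p \<Longrightarrow> CL p c i = {k \<in> J p. ratio p c k = ratio p c i}"
  unfolding cls_def Jset_def ratio_def by auto

lemma cls_nJ: "i < s \<Longrightarrow> i \<notin> J p \<Longrightarrow> CL p c i = {..<s} - J p"
  unfolding cls_def Jset_def by auto

lemma cls_sub: "CL p c i \<subseteq> {..<s}" unfolding cls_def by (simp add: subset_eq)

lemma finite_cls: "finite (CL p c i)" by (rule finite_subset[OF cls_sub]) simp

lemma cls_self: "i < s \<Longrightarrow> i \<in> CL p c i"
  unfolding cls_def by simp

lemma cls_eq: assumes "i < s" "k \<in> CL p c i" shows "CL p c k = CL p c i"
proof (cases "i \<in> J p")
  case True
  have ci: "CL p c i = {k \<in> J p. ratio p c k = ratio p c i}" using cls_J[OF True] .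
  then have k: "k \<in> J p" "ratio p c k = ratio p c i" using assms(2) by blast+
  have "CL p c k = {k' \<in> J p. ratio p c k' = ratio p c k}" using cls_J[OF k(1)] .
  then show ?thesis using ci k(2) by simp
next
  case False
  have ci: "CL p c i = {..<s} - J p" using cls_nJ[OF assms(1) False] .
  then have k: "k < s" "k \<notin> J p" using assms(2) by blast+
  show ?thesis using cls_nJ[OF k] ci by simp
qed

lemma rep_in: assumes "i < s" shows "rep p c i \<in> CL p c i"
proof (cases "p \<in> CL p c i")
  case True then show ?thesis by (simp add: rep_def)
next
  case False
  have "CL p c i \<noteq> {}" using cls_self[OF assms] by blast
  then have "Min (CL p c i) \<in> CL p c i" using finite_cls by (rule Min_in[rotated])
  then show ?thesis using False by (simp add: rep_def)
qed

lemma rep_lt: assumes "i < s" shows "rep p c i < s"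
proof -
  have "rep p c i \<in> CL p c i" by (rule rep_in[OF assms])
  then show ?thesis using cls_sub[of p c i] by (simp add: subset_eq)
qed

lemma cls_rep: assumes "i < s" shows "CL p c (rep p c i) = CL p c i"
  by (rule cls_eq[OF assms rep_in[OF assms]])

lemma is_rep_iff: "is_rep s \<alpha> \<beta> p c k \<longleftrightarrow> k < s \<and> rep p c k = k"
  unfolding is_rep_def rep_def by auto

lemma rep_rep: assumes "i < s" shows "is_rep s \<alpha> \<beta> p c (rep p c i)"
proof -
  have "rep p c (rep p c i) = rep p c i" unfolding rep_def[of p c "rep p c i"] cls_rep[OF assms]
    by (simp add: rep_def)
  then show ?thesis unfolding is_rep_iff using rep_lt[OF assms] by simp
qed

lemma rep_unique:
  assumes "is_rep s \<alpha> \<beta> p c k" "is_rep s \<alpha> \<beta> p c k'" "i \<in> CL p c k" "i \<in> CL p c k'"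
  shows "k = k'"
proof -
  have kk: "k < s" "k' < s" "rep p c k = k" "rep p c k' = k'" using assms(1,2) unfolding is_rep_iff by auto
  have "CL p c i = CL p c k" by (rule cls_eq[OF kk(1) assms(3)])
  moreover have "CL p c i = CL p c k'" by (rule cls_eq[OF kk(2) assms(4)])
  ultimately have "CL p c k = CL p c k'" by simp
  then have "rep p c k = rep p c k'" unfolding rep_def by simp
  then show ?thesis using kk by simp
qed

lemma cls_J_sub: assumes "k \<in> J p" shows "CL p c k \<subseteq> J p"
  using cls_J[OF assms] by blast

lemma J_Union: "J p = (\<Union>k\<in>Rset p c. CL p c k)"
proof
  show "J p \<subseteq> (\<Union>k\<in>Rset p c. CL p c k)"
  proof
    fix i assume i: "i \<in> J p"
    then have "i < s" using J_sub by blast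
    have "rep p c i \<in> J p" using rep_in[OF \<open>i<s\<close>] cls_J_sub[OF i] by blast
    then have "rep p c i \<in> Rset p c" unfolding Rset_def using rep_rep[OF \<open>i<s\<close>] by blast
    moreover have "i \<in> CL p c (rep p c i)" using cls_rep[OF \<open>i<s\<close>] cls_self[OF \<open>i<s\<close>] by simp
    ultimately show "i \<in> (\<Union>k\<in>Rset p c. CL p c k)" by blast
  qed
next
  show "(\<Union>k\<in>Rset p c. CL p c k) \<subseteq> J p"
  proof
    fix i assume "i \<in> (\<Union>k\<in>Rset p c. CL p c k)"
    then obtain k where "k \<in> Rset p c" "i \<in> CL p c k" by blast
    then show "i \<in> J p" using cls_J_sub[of k p c] unfolding Rset_def by blast
  qed
qed

lemma Rset_disj: assumes "k \<in> Rset p c" "k' \<in> Rset p c" "k \<noteq> k'" shows "CL p c k \<inter> CL p c k' = {}"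
proof (rule ccontr)
  assume "CL p c k \<inter> CL p c k' \<noteq> {}"
  then obtain i where "i \<in> CL p c k" "i \<in> CL p c k'" by blast
  then have "k = k'" using rep_unique[of p c k k' i] assms(1,2) unfolding Rset_def by blast
  then show False using assms(3) by simp
qed

lemma finite_Rset: "finite (Rset p c)"
  by (rule finite_subset[OF _ finite_J[of p]]) (auto simp: Rset_def)

lemma H_sub_R: "Hset s m \<alpha> \<beta> p c \<subseteq> Rset p c"
  unfolding Hset_def Rset_def by auto

lemma finite_H: "finite (Hset s m \<alpha> \<beta> p c)" using finite_subset[OF H_sub_R finite_Rset] .

lemma sum_phi_gam: assumes "j < m"
  shows "(\<Sum>i\<in>CL p c k. \<alpha> i j) = phi s m \<alpha> \<beta> p c k + gam s m \<alpha> \<beta> p c k j"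
proof -
  have "phi s m \<alpha> \<beta> p c k \<le> (\<Sum>i\<in>CL p c k. \<alpha> i j)"
    unfolding phi_def using assms by (intro Min_le) auto
  then show ?thesis unfolding gam_def by simp
qed

lemma gam_zero_ex: "\<exists>j<m. gam s m \<alpha> \<beta> p c k j = 0"
proof -
  have ne: "{(\<Sum>i\<in>CL p c k. \<alpha> i j) | j. j < m} \<noteq> {}" using m_pos by auto
  have fin: "finite {(\<Sum>i\<in>CL p c k. \<alpha> i j) | j. j < m}" by simp
  obtain j where "j < m" "phi s m \<alpha> \<beta> p c k = (\<Sum>i\<in>CL p c k. \<alpha> i j)"
    using Min_in[OF fin ne] unfolding phi_def by auto
  then show ?thesis unfolding gam_def by auto
qed

lemma gam_nonH: assumes "k \<in> Rset p c" "k \<notin> Hset s m \<alpha> \<beta> p c" "j < m"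
  shows "gam s m \<alpha> \<beta> p c k j = 0"
proof -
  have kr: "is_rep s \<alpha> \<beta> p c k" "k \<in> J p" using assms(1) unfolding Rset_def by blast+
  have "\<forall>j<m. \<forall>j'<m. gam s m \<alpha> \<beta> p c k j = gam s m \<alpha> \<beta> p c k j'"
  proof (rule ccontr)
    assume "\<not> (\<forall>j<m. \<forall>j'<m. gam s m \<alpha> \<beta> p c k j = gam s m \<alpha> \<beta> p c k j')"
    then have "k \<in> Hset s m \<alpha> \<beta> p c" unfolding Hset_def using kr by blast
    then show False using assms(2) by blast
  qed
  note all = this
  obtain j0 where j0: "j0 < m" "gam s m \<alpha> \<beta> p c k j0 = 0" using gam_zero_ex[of p c k] by blast
  have "gam s m \<alpha> \<beta> p c k j = gam s m \<alpha> \<beta> p c k j0" using all assms(3) j0(1) by blast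
  then show ?thesis using j0(2) by simp
qed

lemma A_nz_J: "i \<in> J p \<Longrightarrow> Ac p i \<noteq> 0" unfolding Jset_def by auto

lemma lin_sgn: fixes A t B :: real assumes "A \<noteq> 0" shows "(A * t + B) / \<bar>A\<bar> = (A / \<bar>A\<bar>) * (t + B / A)"
proof -
  have "A * (t + B / A) = A * t + A * (B / A)" by (simp add: distrib_left)
  also have "A * (B / A) = B" using assms by simp
  finally have "A * (t + B / A) = A * t + B" .
  moreover have "(A / \<bar>A\<bar>) * (t + B / A) = (A * (t + B / A)) / \<bar>A\<bar>" by simp
  ultimately show ?thesis by simp
qed

lemma cons_same:
  assumes "i \<in> J p" "k \<in> J p" "ratio p c i = ratio p c k" "Ac p i > 0 \<longleftrightarrow> Ac p k > 0"
  shows "(Ac p i * t + Bc p c i) / \<bar>Ac p i\<bar> = (Ac p k * t + Bc p c k) / \<bar>Ac p k\<bar>"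
proof -
  have nz: "Ac p i \<noteq> 0" "Ac p k \<noteq> 0" using assms A_nz_J by auto
  have "Ac p i / \<bar>Ac p i\<bar> = Ac p k / \<bar>Ac p k\<bar>"
  proof (cases "Ac p i > 0")
    case True
    then have "Ac p k > 0" using assms(4) by blast
    then show ?thesis using True by simp
  next
    case False
    then have "Ac p i < 0" "Ac p k < 0" using assms(4) nz by linarith+
    then show ?thesis by simp
  qed
  moreover have "Bc p c i / Ac p i = Bc p c k / Ac p k" using assms(3) unfolding ratio_def .
  ultimately show ?thesis unfolding lin_sgn[OF nz(1), of t "Bc p c i"] lin_sgn[OF nz(2), of t "Bc p c k"] by simp
qed

lemma sgn_uniform:
  assumes t0: "t0 \<in> Dom p c" and "i \<in> J p" "k \<in> J p" "ratio p c i = ratio p c k"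
  shows "Ac p i > 0 \<longleftrightarrow> Ac p k > 0"
proof -
  have nz: "Ac p i \<noteq> 0" "Ac p k \<noteq> 0" using assms A_nz_J by auto
  have "i < s" "k < s" using assms J_sub by auto
  then have pos: "0 < Ac p i * t0 + Bc p c i" "0 < Ac p k * t0 + Bc p c k" using t0 unfolding Dom_def by auto
  have e: "Ac p i * t0 + Bc p c i = Ac p i * (t0 + ratio p c i)" "Ac p k * t0 + Bc p c k = Ac p k * (t0 + ratio p c k)"
    using nz unfolding ratio_def by (simp_all add: field_simps)
  have r: "ratio p c i = ratio p c k" by (rule assms(4))
  have "(Ac p i > 0 \<and> t0 + ratio p c i > 0) \<or> (Ac p i < 0 \<and> t0 + ratio p c i < 0)"
    using pos(1) e(1) nz(1) by (auto simp: zero_less_mult_iff)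
  moreover have "(Ac p k > 0 \<and> t0 + ratio p c i > 0) \<or> (Ac p k < 0 \<and> t0 + ratio p c i < 0)"
    using pos(2) e(2) nz(2) r by (auto simp: zero_less_mult_iff)
  ultimately show ?thesis by linarith
qed

end


context net begin

abbreviation "HS p c \<equiv> Hset s m \<alpha> \<beta> p c"
abbreviation "GM p c k j \<equiv> gam s m \<alpha> \<beta> p c k j"
abbreviation "PH p c k \<equiv> phi s m \<alpha> \<beta> p c k"

definition Cst :: "nat \<Rightarrow> (nat \<Rightarrow> real) \<Rightarrow> nat \<Rightarrow> real" where
  "Cst p c j = (\<Prod>i\<in>J p. \<bar>Ac p i\<bar> ^ \<alpha> i j) * (\<Prod>i\<in>{..<s} - J p. Bc p c i ^ \<alpha> i j)"

definition gq :: "nat \<Rightarrow> (nat \<Rightarrow> real) \<Rightarrow> nat \<Rightarrow> real poly" where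
  "gq p c k = [:Bc p c k / \<bar>Ac p k\<bar>, Ac p k / \<bar>Ac p k\<bar>:]"

definition Gpol :: "nat \<Rightarrow> (nat \<Rightarrow> real) \<Rightarrow> (nat \<Rightarrow> real) \<Rightarrow> real poly" where
  "Gpol p \<kappa> c = (\<Sum>j<m. smult (Nm \<alpha> \<beta> p j * \<kappa> j * Cst p c j) (\<Prod>k\<in>HS p c. gq p c k ^ GM p c k j))"

lemma poly_gq: "poly (gq p c k) t = (Ac p k * t + Bc p c k) / \<bar>Ac p k\<bar>"
  unfolding gq_def by (simp add: add_divide_distrib mult.commute)

lemma poly_Gpol: "poly (Gpol p \<kappa> c) t =
   (\<Sum>j<m. Nm \<alpha> \<beta> p j * \<kappa> j * Cst p c j * (\<Prod>k\<in>HS p c. ((Ac p k * t + Bc p c k) / \<bar>Ac p k\<bar>) ^ GM p c k j))"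
  unfolding Gpol_def poly_sum poly_smult poly_prod poly_power poly_gq ..

lemma prod_factor:
  fixes c' :: "nat \<Rightarrow> real"
  assumes jm: "j < m"
    and pos: "\<forall>i<s. 0 < Ac p i * t + Bc p c' i"
    and nJ: "\<forall>i<s. i \<notin> J p \<longrightarrow> Bc p c' i = Bc p c i"
    and Hs: "\<forall>k\<in>HS p c. Bc p c' k = Bc p c k"
    and cons: "\<forall>k\<in>Rset p c. \<forall>i\<in>CL p c k. (Ac p i * t + Bc p c' i) / \<bar>Ac p i\<bar> = (Ac p k * t + Bc p c' k) / \<bar>Ac p k\<bar>"
  shows "(\<Prod>l<s. (Ac p l * t + Bc p c' l) ^ \<alpha> l j) =
    Cst p c j * (\<Prod>k\<in>HS p c. ((Ac p k * t + Bc p c k) / \<bar>Ac p k\<bar>) ^ GM p c k j) *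
    (\<Prod>k\<in>Rset p c. ((Ac p k * t + Bc p c' k) / \<bar>Ac p k\<bar>) ^ PH p c k)"
proof -
  define x where "x l = Ac p l * t + Bc p c' l" for l
  define g where "g l = x l / \<bar>Ac p l\<bar>" for l
  have s1: "(\<Prod>l<s. x l ^ \<alpha> l j) = (\<Prod>l\<in>{..<s} - J p. x l ^ \<alpha> l j) * (\<Prod>l\<in>J p. x l ^ \<alpha> l j)"
    by (rule prod.subset_diff[OF J_sub]) simp
  have s2: "(\<Prod>l\<in>{..<s} - J p. x l ^ \<alpha> l j) = (\<Prod>l\<in>{..<s} - J p. Bc p c l ^ \<alpha> l j)"
  proof (rule prod.cong[OF refl])
    fix l assume l: "l \<in> {..<s} - J p"
    then have "Ac p l = 0" "l < s" "l \<notin> J p" unfolding Jset_def by auto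
    then show "x l ^ \<alpha> l j = Bc p c l ^ \<alpha> l j" unfolding x_def using nJ by simp
  qed
  have s3: "(\<Prod>l\<in>J p. x l ^ \<alpha> l j) = (\<Prod>l\<in>J p. \<bar>Ac p l\<bar> ^ \<alpha> l j) * (\<Prod>l\<in>J p. g l ^ \<alpha> l j)"
    unfolding prod.distrib[symmetric]
  proof (rule prod.cong[OF refl])
    fix l assume "l \<in> J p"
    then have "Ac p l \<noteq> 0" by (rule A_nz_J)
    then have "x l = \<bar>Ac p l\<bar> * g l" unfolding g_def by simp
    then show "x l ^ \<alpha> l j = \<bar>Ac p l\<bar> ^ \<alpha> l j * g l ^ \<alpha> l j" by (simp add: power_mult_distrib)
  qed
  have s4: "(\<Prod>l\<in>J p. g l ^ \<alpha> l j) = (\<Prod>k\<in>Rset p c. g k ^ (PH p c k + GM p c k j))"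
  proof -
    have "(\<Prod>l\<in>J p. g l ^ \<alpha> l j) = (\<Prod>k\<in>Rset p c. \<Prod>l\<in>CL p c k. g l ^ \<alpha> l j)"
      unfolding J_Union[of p c]
      by (rule prod.UNION_disjoint) (use finite_Rset finite_cls Rset_disj in auto)
    also have "\<dots> = (\<Prod>k\<in>Rset p c. \<Prod>l\<in>CL p c k. g k ^ \<alpha> l j)"
    proof (rule prod.cong[OF refl], rule prod.cong[OF refl])
      fix k l assume "k \<in> Rset p c" "l \<in> CL p c k"
      then have "g l = g k" using cons unfolding g_def x_def by blast
      then show "g l ^ \<alpha> l j = g k ^ \<alpha> l j" by simp
    qed
    also have "\<dots> = (\<Prod>k\<in>Rset p c. g k ^ (\<Sum>l\<in>CL p c k. \<alpha> l j))"
      by (simp add: power_sum)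
    also have "\<dots> = (\<Prod>k\<in>Rset p c. g k ^ (PH p c k + GM p c k j))"
      using sum_phi_gam[OF jm] by simp
    finally show ?thesis .
  qed
  have s5: "(\<Prod>k\<in>Rset p c. g k ^ (PH p c k + GM p c k j)) =
      (\<Prod>k\<in>Rset p c. g k ^ GM p c k j) * (\<Prod>k\<in>Rset p c. g k ^ PH p c k)"
    by (simp add: power_add prod.distrib mult.commute)
  have s6: "(\<Prod>k\<in>Rset p c. g k ^ GM p c k j) = (\<Prod>k\<in>HS p c. g k ^ GM p c k j)"
    by (rule prod.mono_neutral_right[OF finite_Rset H_sub_R]) (use gam_nonH jm in auto)
  have s7: "(\<Prod>k\<in>HS p c. g k ^ GM p c k j) = (\<Prod>k\<in>HS p c. ((Ac p k * t + Bc p c k) / \<bar>Ac p k\<bar>) ^ GM p c k j)"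
    by (rule prod.cong[OF refl]) (use Hs in \<open>simp add: g_def x_def\<close>)
  have "(\<Prod>l<s. x l ^ \<alpha> l j) = Cst p c j * (\<Prod>k\<in>HS p c. ((Ac p k * t + Bc p c k) / \<bar>Ac p k\<bar>) ^ GM p c k j) *
    (\<Prod>k\<in>Rset p c. g k ^ PH p c k)"
    unfolding s1 s2 s3 s4 s5 s6 s7 Cst_def by (simp add: mult_ac)
  then show ?thesis unfolding x_def g_def .
qed

lemma F_factor:
  fixes c' :: "nat \<Rightarrow> real"
  assumes pos: "\<forall>i<s. 0 < Ac p i * t + Bc p c' i"
    and nJ: "\<forall>i<s. i \<notin> J p \<longrightarrow> Bc p c' i = Bc p c i"
    and Hs: "\<forall>k\<in>HS p c. Bc p c' k = Bc p c k"
    and cons: "\<forall>k\<in>Rset p c. \<forall>i\<in>CL p c k. (Ac p i * t + Bc p c' i) / \<bar>Ac p i\<bar> = (Ac p k * t + Bc p c' k) / \<bar>Ac p k\<bar>"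
  shows "poly (Fpol p \<kappa> c') t = poly (Gpol p \<kappa> c) t *
    (\<Prod>k\<in>Rset p c. ((Ac p k * t + Bc p c' k) / \<bar>Ac p k\<bar>) ^ PH p c k)"
proof -
  let ?Pos = "\<Prod>k\<in>Rset p c. ((Ac p k * t + Bc p c' k) / \<bar>Ac p k\<bar>) ^ PH p c k"
  have "poly (Fpol p \<kappa> c') t = (\<Sum>j<m. Nm \<alpha> \<beta> p j * \<kappa> j * (\<Prod>l<s. (Ac p l * t + Bc p c' l) ^ \<alpha> l j))"
    unfolding Fpol_def poly_sum poly_smult poly_Qpol by (simp add: Xp_def)
  also have "\<dots> = (\<Sum>j<m. Nm \<alpha> \<beta> p j * \<kappa> j * (Cst p c j * (\<Prod>k\<in>HS p c. ((Ac p k * t + Bc p c k) / \<bar>Ac p k\<bar>) ^ GM p c k j) * ?Pos))"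
    by (rule sum.cong[OF refl]) (simp add: prod_factor[OF _ pos nJ Hs cons])
  also have "\<dots> = poly (Gpol p \<kappa> c) t * ?Pos"
    unfolding poly_Gpol sum_distrib_right by (rule sum.cong[OF refl]) (simp add: mult_ac)
  finally show ?thesis .
qed

end


context net begin

definition Pos :: "nat \<Rightarrow> (nat \<Rightarrow> real) \<Rightarrow> real \<Rightarrow> real" where
  "Pos p c t = (\<Prod>k\<in>Rset p c. ((Ac p k * t + Bc p c k) / \<bar>Ac p k\<bar>) ^ PH p c k)"

lemma Rset_lt: "k \<in> Rset p c \<Longrightarrow> k < s" unfolding Rset_def using J_sub by blast

lemma Pos_pos: assumes "t \<in> Dom p c" shows "Pos p c t > 0"
  unfolding Pos_def
proof (rule prod_pos, rule zero_less_power)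
  fix k assume k: "k \<in> Rset p c"
  then have "k < s" "k \<in> J p" using Rset_lt unfolding Rset_def by auto
  then have "0 < Ac p k * t + Bc p c k" "Ac p k \<noteq> 0" using assms A_nz_J unfolding Dom_def by auto
  then show "0 < (Ac p k * t + Bc p c k) / \<bar>Ac p k\<bar>" by simp
qed

lemma cons_orig:
  assumes t0: "t0 \<in> Dom p c" and k: "k \<in> Rset p c" and i: "i \<in> CL p c k"
  shows "(Ac p i * t + Bc p c i) / \<bar>Ac p i\<bar> = (Ac p k * t + Bc p c k) / \<bar>Ac p k\<bar>"
proof -
  have kJ: "k \<in> J p" using k unfolding Rset_def by blast
  have ci: "CL p c k = {k' \<in> J p. ratio p c k' = ratio p c k}" by (rule cls_J[OF kJ])
  then have iJ: "i \<in> J p" "ratio p c i = ratio p c k" using i by blast+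
  show ?thesis by (rule cons_same[OF iJ(1) kJ iJ(2) sgn_uniform[OF t0 iJ(1) kJ iJ(2)]])
qed

lemma F_G_Pos:
  assumes "t \<in> Dom p c"
  shows "poly (Fpol p \<kappa> c) t = poly (Gpol p \<kappa> c) t * Pos p c t"
  unfolding Pos_def
proof (rule F_factor)
  show "\<forall>i<s. 0 < Ac p i * t + Bc p c i" using assms unfolding Dom_def by blast
  show "\<forall>k\<in>Rset p c. \<forall>i\<in>CL p c k. (Ac p i * t + Bc p c i) / \<bar>Ac p i\<bar> = (Ac p k * t + Bc p c k) / \<bar>Ac p k\<bar>"
    using cons_orig[OF assms] by blast
qed auto

lemma F_G_root: assumes "t \<in> Dom p c"
  shows "poly (Fpol p \<kappa> c) t = 0 \<longleftrightarrow> poly (Gpol p \<kappa> c) t = 0"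
  using F_G_Pos[OF assms, of \<kappa>] Pos_pos[OF assms] by simp

abbreviation "IS p c \<equiv> Iset s m \<alpha> \<beta> p c"

lemma tau_basic:
  assumes "is_tau s m \<alpha> \<beta> p c tau"
  shows "tau \<in> HS p c" "Ac p tau > 0" "IS p c \<noteq> {}" "bdd_below (IS p c)"
    "Inf (IS p c) = - Bc p c tau / Ac p tau" "tau < s" "tau \<in> J p" "tau \<in> Rset p c"
proof -
  show h: "tau \<in> HS p c" "Ac p tau > 0" "IS p c \<noteq> {}" "bdd_below (IS p c)"
    "Inf (IS p c) = - Bc p c tau / Ac p tau" using assms unfolding is_tau_def by auto
  show "tau \<in> Rset p c" using h(1) H_sub_R by blast
  then show "tau < s" "tau \<in> J p" using Rset_lt unfolding Rset_def by auto
qed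

lemma tau_T1:
  assumes tau: "is_tau s m \<alpha> \<beta> p c tau" and k: "k \<in> HS p c" "Ac p k > 0"
  shows "- Bc p c k / Ac p k \<le> - Bc p c tau / Ac p tau"
proof -
  have "\<forall>y\<in>IS p c. - Bc p c k / Ac p k \<le> y"
  proof
    fix y assume "y \<in> IS p c"
    then have "y \<in> Iint \<alpha> \<beta> p c k" unfolding Iset_def using k(1) by blast
    then show "- Bc p c k / Ac p k \<le> y" unfolding Iint_def using k(2) by simp
  qed
  then have "- Bc p c k / Ac p k \<le> Inf (IS p c)" using tau_basic(3)[OF tau] by (intro cInf_greatest) auto
  then show ?thesis using tau_basic(5)[OF tau] by simp
qed

lemma tau_T2:
  assumes tau: "is_tau s m \<alpha> \<beta> p c tau" and t: "t \<in> Dom p c"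
  shows "- Bc p c tau / Ac p tau < t"
proof -
  have "0 < Ac p tau * t + Bc p c tau" using t tau_basic(6)[OF tau] unfolding Dom_def by blast
  then show ?thesis using tau_basic(2)[OF tau] by (simp add: field_simps)
qed

lemma tau_T4:
  assumes tau: "is_tau s m \<alpha> \<beta> p c tau" and t0: "t0 \<in> Dom p c"
    and k: "k \<in> HS p c" "k \<noteq> tau"
  shows "0 < (Ac p k * (- Bc p c tau / Ac p tau) + Bc p c k) / \<bar>Ac p k\<bar>"
proof -
  define L where "L = - Bc p c tau / Ac p tau"
  have kR: "k \<in> Rset p c" using k(1) H_sub_R by blast
  then have kJ: "k \<in> J p" and ks: "k < s" and kr: "is_rep s \<alpha> \<beta> p c k"
    using Rset_lt unfolding Rset_def by auto
  have nz: "Ac p k \<noteq> 0" using A_nz_J[OF kJ] .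
  have "0 < Ac p k * L + Bc p c k"
  proof (cases "Ac p k > 0")
    case True
    have le: "- Bc p c k / Ac p k \<le> L" using tau_T1[OF tau k(1) True] unfolding L_def .
    have ne: "- Bc p c k / Ac p k \<noteq> L"
    proof
      assume eq: "- Bc p c k / Ac p k = L"
      have "ratio p c k = ratio p c tau" using eq unfolding L_def ratio_def by (simp add: minus_divide_left[symmetric])
      then have "k \<in> CL p c tau" using cls_J[OF tau_basic(7)[OF tau]] kJ by blast
      moreover have "k \<in> CL p c k" using cls_self[OF ks] .
      moreover have "is_rep s \<alpha> \<beta> p c tau" using tau_basic(8)[OF tau] unfolding Rset_def by blast
      ultimately have "k = tau" using rep_unique[OF kr] by blast
      then show False using k(2) by simp
    qed
    have "- Bc p c k / Ac p k < L" using le ne by linarith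
    then show ?thesis using True by (simp add: field_simps)
  next
    case False
    then have neg: "Ac p k < 0" using nz by linarith
    have "L < t0" using tau_T2[OF tau t0] unfolding L_def .
    then have "Ac p k * t0 < Ac p k * L" using neg by (simp add: mult_less_cancel_left_neg)
    moreover have "0 < Ac p k * t0 + Bc p c k" using t0 ks unfolding Dom_def by blast
    ultimately show ?thesis by linarith
  qed
  then show ?thesis unfolding L_def using nz by simp
qed

lemma G_at_L:
  assumes tau: "is_tau s m \<alpha> \<beta> p c tau"
  shows "poly (Gpol p \<kappa> c) (- Bc p c tau / Ac p tau) =
    (\<Sum>j\<in>Lset s m \<alpha> \<beta> p c tau. Nm \<alpha> \<beta> p j * \<kappa> j
        * (\<Prod>i\<in>Jset s \<alpha> \<beta> p. \<bar>Acoef \<alpha> \<beta> p i\<bar> ^ \<alpha> i j)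
        * (\<Prod>i\<in>{..<s} - Jset s \<alpha> \<beta> p. Bcoef \<alpha> \<beta> p c i ^ \<alpha> i j)
        * (\<Prod>k\<in>Hset s m \<alpha> \<beta> p c - {tau}.
             (Bcoef \<alpha> \<beta> p c k / \<bar>Acoef \<alpha> \<beta> p k\<bar>
              - Acoef \<alpha> \<beta> p k / \<bar>Acoef \<alpha> \<beta> p k\<bar> * (Bcoef \<alpha> \<beta> p c tau / Acoef \<alpha> \<beta> p tau))
             ^ gam s m \<alpha> \<beta> p c k j))"
proof -
  define L where "L = - Bc p c tau / Ac p tau"
  define T where "T j = Nm \<alpha> \<beta> p j * \<kappa> j * Cst p c j *
     (\<Prod>k\<in>HS p c - {tau}. ((Ac p k * L + Bc p c k) / \<bar>Ac p k\<bar>) ^ GM p c k j)" for j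
  have tauH: "tau \<in> HS p c" using tau_basic(1)[OF tau] .
  have g0: "(Ac p tau * L + Bc p c tau) / \<bar>Ac p tau\<bar> = 0"
    using tau_basic(2)[OF tau] unfolding L_def by simp
  have "poly (Gpol p \<kappa> c) L = (\<Sum>j<m. if GM p c tau j = 0 then T j else 0)"
    unfolding poly_Gpol
  proof (rule sum.cong[OF refl])
    fix j
    have "(\<Prod>k\<in>HS p c. ((Ac p k * L + Bc p c k) / \<bar>Ac p k\<bar>) ^ GM p c k j) =
       ((Ac p tau * L + Bc p c tau) / \<bar>Ac p tau\<bar>) ^ GM p c tau j *
       (\<Prod>k\<in>HS p c - {tau}. ((Ac p k * L + Bc p c k) / \<bar>Ac p k\<bar>) ^ GM p c k j)"
      by (rule prod.remove[OF finite_H tauH])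
    then show "Nm \<alpha> \<beta> p j * \<kappa> j * Cst p c j * (\<Prod>k\<in>HS p c. ((Ac p k * L + Bc p c k) / \<bar>Ac p k\<bar>) ^ GM p c k j) =
      (if GM p c tau j = 0 then T j else 0)"
      unfolding g0 T_def by simp
  qed
  also have "\<dots> = (\<Sum>j\<in>Lset s m \<alpha> \<beta> p c tau. T j)"
    unfolding Lset_def by (simp add: sum.If_cases Int_def conj_commute)
  also have "\<dots> = (\<Sum>j\<in>Lset s m \<alpha> \<beta> p c tau. Nm \<alpha> \<beta> p j * \<kappa> j
        * (\<Prod>i\<in>Jset s \<alpha> \<beta> p. \<bar>Acoef \<alpha> \<beta> p i\<bar> ^ \<alpha> i j)
        * (\<Prod>i\<in>{..<s} - Jset s \<alpha> \<beta> p. Bcoef \<alpha> \<beta> p c i ^ \<alpha> i j)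
        * (\<Prod>k\<in>Hset s m \<alpha> \<beta> p c - {tau}.
             (Bcoef \<alpha> \<beta> p c k / \<bar>Acoef \<alpha> \<beta> p k\<bar>
              - Acoef \<alpha> \<beta> p k / \<bar>Acoef \<alpha> \<beta> p k\<bar> * (Bcoef \<alpha> \<beta> p c tau / Acoef \<alpha> \<beta> p tau))
             ^ gam s m \<alpha> \<beta> p c k j))"
  proof (rule sum.cong[OF refl])
    fix j
    have e: "(Ac p k * L + Bc p c k) / \<bar>Ac p k\<bar> =
       Bc p c k / \<bar>Ac p k\<bar> - Ac p k / \<bar>Ac p k\<bar> * (Bc p c tau / Ac p tau)" for k
      unfolding L_def by (simp add: diff_divide_distrib add_divide_distrib algebra_simps)
    show "T j = Nm \<alpha> \<beta> p j * \<kappa> j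
        * (\<Prod>i\<in>Jset s \<alpha> \<beta> p. \<bar>Acoef \<alpha> \<beta> p i\<bar> ^ \<alpha> i j)
        * (\<Prod>i\<in>{..<s} - Jset s \<alpha> \<beta> p. Bcoef \<alpha> \<beta> p c i ^ \<alpha> i j)
        * (\<Prod>k\<in>Hset s m \<alpha> \<beta> p c - {tau}.
             (Bcoef \<alpha> \<beta> p c k / \<bar>Acoef \<alpha> \<beta> p k\<bar>
              - Acoef \<alpha> \<beta> p k / \<bar>Acoef \<alpha> \<beta> p k\<bar> * (Bcoef \<alpha> \<beta> p c tau / Acoef \<alpha> \<beta> p tau))
             ^ gam s m \<alpha> \<beta> p c k j)"
      unfolding T_def Cst_def e by (simp add: mult.assoc)
  qed
  finally show ?thesis unfolding L_def .
qed

lemma in_B_iff: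
  "in_B s m \<alpha> \<beta> p \<kappa> c \<longleftrightarrow> (\<exists>tau. is_tau s m \<alpha> \<beta> p c tau \<and> poly (Gpol p \<kappa> c) (- Bc p c tau / Ac p tau) > 0)"
  unfolding in_B_def using G_at_L by auto

end


context net begin

lemma Ac_p_pos: "a p \<noteq> 0 \<Longrightarrow> Ac p p > 0" using Ac_self by simp

lemma p_in_J: "p < s \<Longrightarrow> a p \<noteq> 0 \<Longrightarrow> p \<in> J p" unfolding Jset_def using Ac_self by simp

lemma Dom_pos: assumes "p < s" "a p \<noteq> 0" "t \<in> Dom p c" shows "t > 0"
  using assms Ac_self[of p] Bc_self[of p c] unfolding Dom_def by force

lemma tau_L_nonneg:
  assumes "a p \<noteq> 0" "p \<in> HS p c" "is_tau s m \<alpha> \<beta> p c tau"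
  shows "0 \<le> - Bc p c tau / Ac p tau"
  using tau_T1[OF assms(3,2) Ac_p_pos[OF assms(1)]] by (simp add: Bc_self)

lemma tau_exists:
  assumes p: "p < s" "a p \<noteq> 0" and pH: "p \<in> HS p c" and t0: "t0 \<in> Dom p c"
  shows "\<exists>tau. is_tau s m \<alpha> \<beta> p c tau"
proof -
  define Kp where "Kp = {k \<in> HS p c. Ac p k > 0}"
  define f where "f k = - Bc p c k / Ac p k" for k
  have finK: "finite Kp" unfolding Kp_def using finite_H by simp
  have pK: "p \<in> Kp" unfolding Kp_def using pH Ac_p_pos[OF p(2)] by simp
  have fp: "f p = 0" unfolding f_def by (simp add: Bc_self)
  have neK: "f ` Kp \<noteq> {}" using pK by blast
  obtain tau where tau: "tau \<in> Kp" "f tau = Max (f ` Kp)"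
    using Max_in[OF finite_imageI[OF finK] neK] by auto
  have tmax: "f k \<le> f tau" if "k \<in> Kp" for k using tau(2) finK that by simp
  define v where "v = f tau"
  have v0: "0 \<le> v" using tmax[OF pK] fp unfolding v_def by simp
  have Hs: "k \<in> J p" "k < s" if "k \<in> HS p c" for k
  proof -
    have "k \<in> Rset p c" using that H_sub_R by blast
    then show "k \<in> J p" "k < s" using Rset_lt[of k p c] unfolding Rset_def by auto
  qed
  have memI: "w \<in> IS p c" if w: "v < w" "w \<le> t0" for w
    unfolding Iset_def
  proof (rule InterI, safe)
    fix k assume k: "k \<in> HS p c"
    have nz: "Ac p k \<noteq> 0" using A_nz_J Hs[OF k] by blast
    have pt: "0 < Ac p k * t0 + Bc p c k" using t0 Hs(2)[OF k] unfolding Dom_def by blast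
    show "w \<in> Iint \<alpha> \<beta> p c k"
    proof (cases "Ac p k > 0")
      case True
      then have "f k \<le> v" using tmax k unfolding Kp_def v_def by blast
      then have "- Bc p c k / Ac p k < w" using w unfolding f_def by linarith
      then show ?thesis using True unfolding Iint_def by simp
    next
      case False
      then have neg: "Ac p k < 0" using nz by linarith
      have "Ac p k * t0 \<le> Ac p k * w" using w(2) neg by (simp add: mult_left_mono_neg)
      then have "0 < Ac p k * w + Bc p c k" using pt by linarith
      then have "w < - Bc p c k / Ac p k" using neg by (simp add: field_simps)
      moreover have "0 < w" using w v0 by linarith
      ultimately show ?thesis using neg unfolding Iint_def by simp
    qed
  qed
  have t0v: "v < t0"
  proof -
    have "tau < s" using tau(1) Hs unfolding Kp_def by blast
    then have "0 < Ac p tau * t0 + Bc p c tau" using t0 unfolding Dom_def by blast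
    then show ?thesis using tau(1) unfolding Kp_def v_def f_def by (simp add: field_simps)
  qed
  have ne: "IS p c \<noteq> {}" using memI[of t0] t0v by blast
  have lower: "v \<le> x" if "x \<in> IS p c" for x
  proof -
    have "x \<in> Iint \<alpha> \<beta> p c tau" using that tau(1) unfolding Iset_def Kp_def by blast
    then show ?thesis using tau(1) unfolding Iint_def Kp_def v_def f_def by auto
  qed
  have bdd: "bdd_below (IS p c)" unfolding bdd_below_def using lower by blast
  have inf: "Inf (IS p c) = v"
  proof (rule cInf_eq_non_empty[OF ne lower])
    fix y assume yl: "\<And>x. x \<in> IS p c \<Longrightarrow> y \<le> x"
    show "y \<le> v"
    proof (rule ccontr)
      assume "\<not> y \<le> v"
      then have yv: "v < y" by simp
      define w where "w = min t0 ((v + y) / 2)"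
      have "v < w" "w \<le> t0" using yv t0v unfolding w_def by auto
      then have "w \<in> IS p c" by (rule memI)
      then have "y \<le> w" by (rule yl)
      moreover have "w < y" using yv unfolding w_def by (simp add: min_def)
      ultimately show False by simp
    qed
  qed
  have "is_tau s m \<alpha> \<beta> p c tau"
    unfolding is_tau_def using tau(1) ne bdd inf unfolding Kp_def v_def f_def by blast
  then show ?thesis by blast
qed

lemma Bcoef_upd:
  assumes "a p \<noteq> 0" "\<forall>i. i \<noteq> p \<longrightarrow> c' i = (if i \<in> M then a p * Ac p i * r else c i)" "p \<notin> M"
  shows "Bc p c' i = (if i \<in> M then - (Ac p i * r) else Bc p c i)"
  using assms unfolding Bcoef_def by auto

lemma shift_no_root:
  assumes p: "p < s" "a p \<noteq> 0" and pH: "p \<in> HS p c" and tau: "is_tau s m \<alpha> \<beta> p c tau"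
    and t0: "t0 \<in> Dom p c"
    and maxc: "\<And>c'. finite (Roots p \<kappa> c') \<and> card (Roots p \<kappa> c') \<le> card (Roots p \<kappa> c)"
    and z: "- Bc p c tau / Ac p tau < z" "z \<le> y" "y \<in> Dom p c" "z \<notin> Dom p c"
  shows "poly (Gpol p \<kappa> c) z \<noteq> 0"
proof
  assume Gz: "poly (Gpol p \<kappa> c) z = 0"
  define L where "L = - Bc p c tau / Ac p tau"
  define r where "r = L - 1"
  define M where "M = {i \<in> J p. Ac p i > 0 \<and> L < - Bc p c i / Ac p i}"
  define c' where "c' i = (if i \<in> M then a p * Ac p i * r else c i)" for i
  have L0: "0 \<le> L" using tau_L_nonneg[OF p(2) pH tau] unfolding L_def .
  have pM: "p \<notin> M" unfolding M_def using L0 by (simp add: Bc_self)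
  have Bc': "Bc p c' i = (if i \<in> M then - (Ac p i * r) else Bc p c i)" for i
    by (rule Bcoef_upd[OF p(2) _ pM]) (simp add: c'_def)
  have iJs: "i \<in> J p \<Longrightarrow> i < s" for i using J_sub by blast
  have HnM: "k \<notin> M" if "k \<in> HS p c" for k
  proof
    assume kM: "k \<in> M"
    then have "Ac p k > 0" "L < - Bc p c k / Ac p k" unfolding M_def by auto
    then show False using tau_T1[OF tau that] unfolding L_def by linarith
  qed
  have inDom': "w \<in> Dom p c'" if w: "L < w" "w \<le> y'" "y' \<in> Dom p c" for w y'
    unfolding Dom_def
  proof (intro CollectI allI impI)
    fix i assume i: "i < s"
    show "0 < Ac p i * w + Bc p c' i"
    proof (cases "i \<in> M")
      case True
      then have "Ac p i > 0" unfolding M_def by simp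
      moreover have "w - r > 0" using w unfolding r_def by simp
      ultimately have "0 < Ac p i * (w - r)" by simp
      then show ?thesis using True Bc' by (simp add: algebra_simps)
    next
      case False
      then have b: "Bc p c' i = Bc p c i" using Bc' by simp
      have py: "0 < Ac p i * y' + Bc p c i" using w(3) i unfolding Dom_def by blast
      consider "Ac p i = 0" | "Ac p i > 0" | "Ac p i < 0" by linarith
      then show ?thesis
      proof cases
        case 1 then show ?thesis using py b by simp
      next
        case 2
        then have "i \<in> J p" using i unfolding Jset_def by simp
        then have "- Bc p c i / Ac p i \<le> L" using False 2 unfolding M_def by auto
        then have "- Bc p c i / Ac p i < w" using w by linarith
        then show ?thesis using 2 b by (simp add: field_simps)
      next
        case 3
        have "Ac p i * y' \<le> Ac p i * w" using w(2) 3 by (simp add: mult_left_mono_neg)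
        then show ?thesis using py b by linarith
      qed
    qed
  qed
  have consM: "i \<in> M \<longleftrightarrow> k \<in> M" if k: "k \<in> Rset p c" and i: "i \<in> CL p c k" for i k
  proof -
    have kJ: "k \<in> J p" using k unfolding Rset_def by blast
    have iJ: "i \<in> J p" "ratio p c i = ratio p c k" using i cls_J[OF kJ] by blast+
    have sg: "Ac p i > 0 \<longleftrightarrow> Ac p k > 0" by (rule sgn_uniform[OF t0 iJ(1) kJ iJ(2)])
    have "- Bc p c i / Ac p i = - Bc p c k / Ac p k" using iJ(2) unfolding ratio_def by simp
    then show ?thesis unfolding M_def using sg iJ(1) kJ by auto
  qed
  define Pos' where "Pos' w = (\<Prod>k\<in>Rset p c. ((Ac p k * w + Bc p c' k) / \<bar>Ac p k\<bar>) ^ PH p c k)" for w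
  have Fc': "poly (Fpol p \<kappa> c') w = poly (Gpol p \<kappa> c) w * Pos' w" if w: "w \<in> Dom p c'" for w
    unfolding Pos'_def
  proof (rule F_factor)
    show "\<forall>i<s. 0 < Ac p i * w + Bc p c' i" using w unfolding Dom_def by blast
    show "\<forall>i<s. i \<notin> J p \<longrightarrow> Bc p c' i = Bc p c i" using Bc' unfolding M_def by auto
    show "\<forall>k\<in>HS p c. Bc p c' k = Bc p c k" using Bc' HnM by auto
    show "\<forall>k\<in>Rset p c. \<forall>i\<in>CL p c k. (Ac p i * w + Bc p c' i) / \<bar>Ac p i\<bar> = (Ac p k * w + Bc p c' k) / \<bar>Ac p k\<bar>"
    proof (intro ballI)
      fix k i assume k: "k \<in> Rset p c" and i: "i \<in> CL p c k"
      show "(Ac p i * w + Bc p c' i) / \<bar>Ac p i\<bar> = (Ac p k * w + Bc p c' k) / \<bar>Ac p k\<bar>"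
      proof (cases "k \<in> M")
        case True
        then have iM: "i \<in> M" using consM[OF k i] by simp
        have pos: "Ac p i > 0" "Ac p k > 0" using True iM unfolding M_def by auto
        have "(Ac p i * w + Bc p c' i) / \<bar>Ac p i\<bar> = w - r" using iM pos(1) Bc' by (simp add: field_simps)
        moreover have "(Ac p k * w + Bc p c' k) / \<bar>Ac p k\<bar> = w - r" using True pos(2) Bc' by (simp add: field_simps)
        ultimately show ?thesis by simp
      next
        case False
        then have iM: "i \<notin> M" using consM[OF k i] by simp
        show ?thesis using cons_orig[OF t0 k i, of w] Bc' False iM by simp
      qed
    qed
  qed
  have "insert z (Roots p \<kappa> c) \<subseteq> Roots p \<kappa> c'"
  proof
    fix t assume "t \<in> insert z (Roots p \<kappa> c)"
    then consider "t = z" | "t \<in> Roots p \<kappa> c" by blast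
    then show "t \<in> Roots p \<kappa> c'"
    proof cases
      case 1
      have "z \<in> Dom p c'" using inDom'[of z y] z unfolding L_def by blast
      then show ?thesis using Fc'[of z] Gz 1 unfolding Roots_def by simp
    next
      case 2
      then have tD: "t \<in> Dom p c" and Ft: "poly (Fpol p \<kappa> c) t = 0" unfolding Roots_def by auto
      have "L < t" using tau_T2[OF tau tD] unfolding L_def .
      then have tD': "t \<in> Dom p c'" using inDom'[of t t] tD by blast
      have "poly (Gpol p \<kappa> c) t = 0" using F_G_root[OF tD] Ft by blast
      then show ?thesis using Fc'[OF tD'] tD' unfolding Roots_def by simp
    qed
  qed
  moreover have "z \<notin> Roots p \<kappa> c" using z(4) unfolding Roots_def by blast
  moreover have "finite (Roots p \<kappa> c)" "finite (Roots p \<kappa> c')" using maxc by blast+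
  ultimately have "card (Roots p \<kappa> c) + 1 \<le> card (Roots p \<kappa> c')"
    by (metis card_insert_disjoint card_mono Suc_eq_plus1)
  then show False using maxc[of c'] by linarith
qed

end


context net begin

lemma G_no_root:
  assumes p: "p < s" "a p \<noteq> 0" and pH: "p \<in> HS p c" and tau: "is_tau s m \<alpha> \<beta> p c tau"
    and maxc: "\<And>c'. finite (Roots p \<kappa> c') \<and> card (Roots p \<kappa> c') \<le> card (Roots p \<kappa> c)"
    and r1: "r1 \<in> Roots p \<kappa> c" "\<forall>t\<in>Roots p \<kappa> c. r1 \<le> t"
    and z: "- Bc p c tau / Ac p tau < z" "z < r1"
  shows "poly (Gpol p \<kappa> c) z \<noteq> 0"
proof (cases "z \<in> Dom p c")
  case True
  show ?thesis
  proof
    assume "poly (Gpol p \<kappa> c) z = 0"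
    then have "z \<in> Roots p \<kappa> c" using F_G_root[OF True] True unfolding Roots_def by blast
    then show False using r1(2) z(2) by force
  qed
next
  case False
  have r1D: "r1 \<in> Dom p c" using r1(1) unfolding Roots_def by blast
  show ?thesis by (rule shift_no_root[OF p pH tau r1D maxc z(1) _ r1D False]) (use z in simp)
qed

lemma G_pos_before:
  assumes p: "p < s" "a p \<noteq> 0" and pH: "p \<in> HS p c" and tau: "is_tau s m \<alpha> \<beta> p c tau"
    and maxc: "\<And>c'. finite (Roots p \<kappa> c') \<and> card (Roots p \<kappa> c') \<le> card (Roots p \<kappa> c)"
    and r1: "r1 \<in> Roots p \<kappa> c" "\<forall>t\<in>Roots p \<kappa> c. r1 \<le> t"
    and GL: "poly (Gpol p \<kappa> c) (- Bc p c tau / Ac p tau) > 0"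
    and y: "- Bc p c tau / Ac p tau < y" "y < r1"
  shows "poly (Gpol p \<kappa> c) y > 0"
proof (rule ccontr)
  define L where "L = - Bc p c tau / Ac p tau"
  assume "\<not> poly (Gpol p \<kappa> c) y > 0"
  moreover have "poly (Gpol p \<kappa> c) y \<noteq> 0" by (rule G_no_root[OF p pH tau maxc r1 y])
  ultimately have "poly (Gpol p \<kappa> c) y < 0" by linarith
  then have "poly (Gpol p \<kappa> c) L * poly (Gpol p \<kappa> c) y < 0" using GL unfolding L_def
    by (simp add: mult_pos_neg)
  then obtain z where "L < z" "z < y" "poly (Gpol p \<kappa> c) z = 0" using poly_IVT y unfolding L_def by blast
  moreover have "poly (Gpol p \<kappa> c) z \<noteq> 0"
    by (rule G_no_root[OF p pH tau maxc r1]) (use calculation y in \<open>auto simp: L_def\<close>)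
  ultimately show False by simp
qed

lemma GL_nonneg:
  assumes p: "p < s" "a p \<noteq> 0" and pH: "p \<in> HS p c" and tau: "is_tau s m \<alpha> \<beta> p c tau"
    and maxc: "\<And>c'. finite (Roots p \<kappa> c') \<and> card (Roots p \<kappa> c') \<le> card (Roots p \<kappa> c)"
    and r1: "r1 \<in> Roots p \<kappa> c" "\<forall>t\<in>Roots p \<kappa> c. r1 \<le> t"
    and y: "- Bc p c tau / Ac p tau < y" "y < r1" "poly (Gpol p \<kappa> c) y > 0"
  shows "poly (Gpol p \<kappa> c) (- Bc p c tau / Ac p tau) \<ge> 0"
proof (rule ccontr)
  define L where "L = - Bc p c tau / Ac p tau"
  assume "\<not> poly (Gpol p \<kappa> c) (- Bc p c tau / Ac p tau) \<ge> 0"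
  then have "poly (Gpol p \<kappa> c) L * poly (Gpol p \<kappa> c) y < 0" using y(3) unfolding L_def
    by (simp add: mult_neg_pos)
  then obtain z where "L < z" "z < y" "poly (Gpol p \<kappa> c) z = 0" using poly_IVT y unfolding L_def by blast
  moreover have "poly (Gpol p \<kappa> c) z \<noteq> 0"
    by (rule G_no_root[OF p pH tau maxc r1]) (use calculation y in \<open>auto simp: L_def\<close>)
  ultimately show False by simp
qed

lemma near_left:
  assumes p: "p < s" "a p \<noteq> 0" and tau: "is_tau s m \<alpha> \<beta> p c tau"
    and r1: "r1 \<in> Dom p c" and d: "d > 0"
  shows "\<exists>h>0. h < d \<and> r1 - h \<in> Dom p c \<and> - Bc p c tau / Ac p tau < r1 - h"
proof -
  obtain \<rho> where \<rho>: "\<rho> > 0" "\<forall>y. \<bar>y - r1\<bar> < \<rho> \<longrightarrow> y \<in> Dom p c" using Dom_open[OF r1] by blast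
  have Lr: "- Bc p c tau / Ac p tau < r1" using tau_T2[OF tau r1] .
  define h where "h = min (min d \<rho>) (r1 - (- Bc p c tau / Ac p tau)) / 2"
  have m: "min (min d \<rho>) (r1 - (- Bc p c tau / Ac p tau)) \<le> d"
    "min (min d \<rho>) (r1 - (- Bc p c tau / Ac p tau)) \<le> \<rho>"
    "min (min d \<rho>) (r1 - (- Bc p c tau / Ac p tau)) \<le> r1 - (- Bc p c tau / Ac p tau)"
    "min (min d \<rho>) (r1 - (- Bc p c tau / Ac p tau)) > 0" using d \<rho> Lr by auto
  have h: "h > 0" "h < d" "h < \<rho>" "- Bc p c tau / Ac p tau < r1 - h" using m unfolding h_def by linarith+
  have "\<bar>(r1 - h) - r1\<bar> < \<rho>" using h by simp
  then have "r1 - h \<in> Dom p c" using \<rho> by blast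
  then show ?thesis using h by blast
qed

lemma first_stable:
  assumes p: "p < s" "a p \<noteq> 0" and pH: "p \<in> HS p c" and tau: "is_tau s m \<alpha> \<beta> p c tau"
    and maxc: "\<And>c'. finite (Roots p \<kappa> c') \<and> card (Roots p \<kappa> c') \<le> card (Roots p \<kappa> c)"
    and r1: "r1 \<in> Roots p \<kappa> c" "\<forall>t\<in>Roots p \<kappa> c. r1 \<le> t"
    and GL: "poly (Gpol p \<kappa> c) (- Bc p c tau / Ac p tau) > 0"
    and simple: "poly (pderiv (Fpol p \<kappa> c)) r1 \<noteq> 0"
  shows "poly (pderiv (Fpol p \<kappa> c)) r1 < 0"
proof (rule ccontr)
  assume "\<not> poly (pderiv (Fpol p \<kappa> c)) r1 < 0"
  then have pos: "poly (pderiv (Fpol p \<kappa> c)) r1 > 0" using simple by linarith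
  obtain d where d: "d > 0" "\<forall>h>0. h < d \<longrightarrow> poly (Fpol p \<kappa> c) (r1 - h) < poly (Fpol p \<kappa> c) r1"
    using DERIV_pos_inc_left[OF poly_DERIV pos] by blast
  have r1D: "r1 \<in> Dom p c" and F0: "poly (Fpol p \<kappa> c) r1 = 0" using r1(1) unfolding Roots_def by auto
  obtain h where h: "h > 0" "h < d" "r1 - h \<in> Dom p c" "- Bc p c tau / Ac p tau < r1 - h"
    using near_left[OF p tau r1D d(1)] by blast
  have "poly (Gpol p \<kappa> c) (r1 - h) > 0"
    by (rule G_pos_before[OF p pH tau maxc r1 GL h(4)]) (use h in simp)
  then have "poly (Fpol p \<kappa> c) (r1 - h) > 0"
    using F_G_Pos[OF h(3), of \<kappa>] Pos_pos[OF h(3)] by simp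
  moreover have "poly (Fpol p \<kappa> c) (r1 - h) < 0" using d h F0 by auto
  ultimately show False by simp
qed

lemma stable_first_GL:
  assumes p: "p < s" "a p \<noteq> 0" and pH: "p \<in> HS p c" and tau: "is_tau s m \<alpha> \<beta> p c tau"
    and maxc: "\<And>c'. finite (Roots p \<kappa> c') \<and> card (Roots p \<kappa> c') \<le> card (Roots p \<kappa> c)"
    and r1: "r1 \<in> Roots p \<kappa> c" "\<forall>t\<in>Roots p \<kappa> c. r1 \<le> t"
    and st: "poly (pderiv (Fpol p \<kappa> c)) r1 < 0"
  shows "poly (Gpol p \<kappa> c) (- Bc p c tau / Ac p tau) \<ge> 0"
proof -
  obtain d where d: "d > 0" "\<forall>h>0. h < d \<longrightarrow> poly (Fpol p \<kappa> c) r1 < poly (Fpol p \<kappa> c) (r1 - h)"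
    using DERIV_neg_dec_left[OF poly_DERIV st] by blast
  have r1D: "r1 \<in> Dom p c" and F0: "poly (Fpol p \<kappa> c) r1 = 0" using r1(1) unfolding Roots_def by auto
  obtain h where h: "h > 0" "h < d" "r1 - h \<in> Dom p c" "- Bc p c tau / Ac p tau < r1 - h"
    using near_left[OF p tau r1D d(1)] by blast
  have "poly (Fpol p \<kappa> c) (r1 - h) > 0" using d h F0 by auto
  then have "poly (Gpol p \<kappa> c) (r1 - h) > 0"
    using F_G_Pos[OF h(3), of \<kappa>] Pos_pos[OF h(3)] by (simp add: zero_less_mult_iff)
  moreover have "r1 - h < r1" using h by simp
  ultimately show ?thesis using GL_nonneg[OF p pH tau maxc r1 h(4)] by blast
qed

end


context net begin

lemma Nm_p_nz: "p < s \<Longrightarrow> a p \<noteq> 0 \<Longrightarrow> j < m \<Longrightarrow> Nm \<alpha> \<beta> p j \<noteq> 0"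
  using Nm_lam[of p j] lam_nz[of j] by simp

lemma Fpol_upd:
  assumes "j < m"
  shows "Fpol p (\<kappa>(j := \<kappa> j + d)) c = Fpol p \<kappa> c + smult (Nm \<alpha> \<beta> p j * d) (Qpol p c j)"
proof -
  have "Fpol p (\<kappa>(j := \<kappa> j + d)) c =
     (\<Sum>j'<m. smult (Nm \<alpha> \<beta> p j' * \<kappa> j') (Qpol p c j') + (if j' = j then smult (Nm \<alpha> \<beta> p j * d) (Qpol p c j) else 0))"
    unfolding Fpol_def by (rule sum.cong[OF refl]) (auto simp: algebra_simps smult_add_left)
  also have "\<dots> = Fpol p \<kappa> c + smult (Nm \<alpha> \<beta> p j * d) (Qpol p c j)"
    unfolding sum.distrib Fpol_def using assms by simp
  finally show ?thesis .
qed

lemma Qpol_pos: assumes "t \<in> Dom p c" shows "poly (Qpol p c j) t > 0"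
  unfolding poly_Qpol
proof (rule prod_pos, rule zero_less_power)
  fix l assume "l \<in> {..<s}"
  then show "0 < Xp p c t l" using assms unfolding Dom_def Xp_def by auto
qed

lemma rate_upd: assumes "rate_vec m \<kappa>" "\<bar>d\<bar> < \<kappa> j" shows "rate_vec m (\<kappa>(j := \<kappa> j + d))"
  using assms unfolding rate_vec_def by auto

definition Gterm :: "nat \<Rightarrow> (nat \<Rightarrow> real) \<Rightarrow> real \<Rightarrow> nat \<Rightarrow> real" where
  "Gterm p c t j = Cst p c j * (\<Prod>k\<in>HS p c. ((Ac p k * t + Bc p c k) / \<bar>Ac p k\<bar>) ^ GM p c k j)"

lemma poly_Gpol_term: "poly (Gpol p \<kappa> c) t = (\<Sum>j<m. Nm \<alpha> \<beta> p j * \<kappa> j * Gterm p c t j)"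
  unfolding poly_Gpol Gterm_def by (simp add: mult.assoc)

lemma Gpol_upd:
  assumes "j < m"
  shows "poly (Gpol p (\<kappa>(j := \<kappa> j + d)) c) t = poly (Gpol p \<kappa> c) t + Nm \<alpha> \<beta> p j * d * Gterm p c t j"
proof -
  have "poly (Gpol p (\<kappa>(j := \<kappa> j + d)) c) t =
    (\<Sum>j'<m. Nm \<alpha> \<beta> p j' * \<kappa> j' * Gterm p c t j' + (if j' = j then Nm \<alpha> \<beta> p j * d * Gterm p c t j else 0))"
    unfolding poly_Gpol_term by (rule sum.cong[OF refl]) (auto simp: algebra_simps)
  also have "\<dots> = poly (Gpol p \<kappa> c) t + Nm \<alpha> \<beta> p j * d * Gterm p c t j"
    unfolding sum.distrib poly_Gpol_term using assms by simp
  finally show ?thesis .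
qed

lemma Cst_pos: assumes "t0 \<in> Dom p c" shows "Cst p c j > 0"
  unfolding Cst_def
proof (rule mult_pos_pos; rule prod_pos; rule zero_less_power)
  fix i assume "i \<in> J p" then show "0 < \<bar>Ac p i\<bar>" using A_nz_J by simp
next
  fix i assume i: "i \<in> {..<s} - J p"
  then have "Ac p i = 0" "i < s" unfolding Jset_def by auto
  then show "0 < Bc p c i" using assms unfolding Dom_def by force
qed

lemma Gterm_L:
  assumes tau: "is_tau s m \<alpha> \<beta> p c tau" and t0: "t0 \<in> Dom p c"
  shows "j \<in> Lset s m \<alpha> \<beta> p c tau \<Longrightarrow> Gterm p c (- Bc p c tau / Ac p tau) j > 0"
    and "j \<notin> Lset s m \<alpha> \<beta> p c tau \<Longrightarrow> j < m \<Longrightarrow> Gterm p c (- Bc p c tau / Ac p tau) j = 0"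
proof -
  define L where "L = - Bc p c tau / Ac p tau"
  have tauH: "tau \<in> HS p c" using tau_basic(1)[OF tau] .
  have g0: "(Ac p tau * L + Bc p c tau) / \<bar>Ac p tau\<bar> = 0"
    using tau_basic(2)[OF tau] unfolding L_def by simp
  have split: "Gterm p c L j = Cst p c j * (((Ac p tau * L + Bc p c tau) / \<bar>Ac p tau\<bar>) ^ GM p c tau j *
       (\<Prod>k\<in>HS p c - {tau}. ((Ac p k * L + Bc p c k) / \<bar>Ac p k\<bar>) ^ GM p c k j))"
    unfolding Gterm_def by (simp only: prod.remove[OF finite_H tauH])
  {
    assume "j \<in> Lset s m \<alpha> \<beta> p c tau"
    then have gz: "GM p c tau j = 0" unfolding Lset_def by simp
    have "(\<Prod>k\<in>HS p c - {tau}. ((Ac p k * L + Bc p c k) / \<bar>Ac p k\<bar>) ^ GM p c k j) > 0"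
    proof (rule prod_pos, rule zero_less_power)
      fix k assume "k \<in> HS p c - {tau}"
      then show "0 < (Ac p k * L + Bc p c k) / \<bar>Ac p k\<bar>" using tau_T4[OF tau t0] unfolding L_def by blast
    qed
    then show "Gterm p c (- Bc p c tau / Ac p tau) j > 0"
      using split gz Cst_pos[OF t0, of j] unfolding L_def by simp
  }
  {
    assume "j \<notin> Lset s m \<alpha> \<beta> p c tau" "j < m"
    then have "GM p c tau j \<noteq> 0" unfolding Lset_def by simp
    then show "Gterm p c (- Bc p c tau / Ac p tau) j = 0" using split g0 unfolding L_def by simp
  }
qed

lemma perturb_config:
  assumes p: "p < s" "a p \<noteq> 0" and rate: "rate_vec m \<kappa>" and j: "j < m"
    and fin: "finite (Roots p \<kappa> c)" and cardN: "card (Roots p \<kappa> c) = N" and N1: "N \<ge> 1"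
    and maxN: "\<And>\<kappa>'. rate_vec m \<kappa>' \<Longrightarrow> finite (Roots p \<kappa>' c) \<and> card (Roots p \<kappa>' c) \<le> N"
    and e0: "e0 > 0"
  shows "\<exists>\<epsilon>. 0 < \<epsilon> \<and> \<epsilon> < e0 \<and> rate_vec m (\<kappa>(j := \<kappa> j + \<epsilon> / Nm \<alpha> \<beta> p j)) \<and>
     finite (Roots p (\<kappa>(j := \<kappa> j + \<epsilon> / Nm \<alpha> \<beta> p j)) c) \<and>
     card (Roots p (\<kappa>(j := \<kappa> j + \<epsilon> / Nm \<alpha> \<beta> p j)) c) = N \<and>
     (\<forall>t\<in>Roots p (\<kappa>(j := \<kappa> j + \<epsilon> / Nm \<alpha> \<beta> p j)) c.
        poly (pderiv (Fpol p (\<kappa>(j := \<kappa> j + \<epsilon> / Nm \<alpha> \<beta> p j)) c)) t \<noteq> 0)"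
proof -
  define P where "P = Fpol p \<kappa> c"
  define Q where "Q = Qpol p c j"
  define K where "K \<epsilon> = \<kappa>(j := \<kappa> j + \<epsilon> / Nm \<alpha> \<beta> p j)" for \<epsilon>
  have nz: "Nm \<alpha> \<beta> p j \<noteq> 0" using Nm_p_nz[OF p j] .
  have FK: "Fpol p (K \<epsilon>) c = P + smult \<epsilon> Q" for \<epsilon>
    unfolding K_def P_def Q_def Fpol_upd[OF j] using nz by simp
  have RK: "Roots p (K \<epsilon>) c = {t \<in> Dom p c. poly (P + smult \<epsilon> Q) t = 0}" for \<epsilon>
    unfolding Roots_def FK ..
  define e where "e = \<kappa> j * \<bar>Nm \<alpha> \<beta> p j\<bar>"
  have epos: "e > 0" using rate j nz unfolding e_def rate_vec_def by simp
  have rK: "rate_vec m (K \<epsilon>)" if "\<bar>\<epsilon>\<bar> < e" for \<epsilon>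
  proof -
    have "\<bar>\<epsilon> / Nm \<alpha> \<beta> p j\<bar> < \<kappa> j" using that nz unfolding e_def by (simp add: abs_divide pos_divide_less_eq)
    then show ?thesis unfolding K_def by (rule rate_upd[OF rate])
  qed
  have "\<exists>\<epsilon>. 0 < \<epsilon> \<and> \<epsilon> < min e0 e \<and> card {t \<in> Dom p c. poly (P + smult \<epsilon> Q) t = 0} = N \<and>
           (\<forall>t\<in>Dom p c. poly (P + smult \<epsilon> Q) t = 0 \<longrightarrow> poly (pderiv (P + smult \<epsilon> Q)) t \<noteq> 0)"
  proof (rule perturb[OF Dom_open Qpol_pos[of _ p c j, folded Q_def] _ _ N1 epos])
    show "finite {t \<in> Dom p c. poly P t = 0}" using fin unfolding Roots_def P_def .
    show "card {t \<in> Dom p c. poly P t = 0} = N" using cardN unfolding Roots_def P_def .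
    fix \<epsilon> :: real assume "\<bar>\<epsilon>\<bar> < e"
    then show "finite {t \<in> Dom p c. poly (P + smult \<epsilon> Q) t = 0} \<and> card {t \<in> Dom p c. poly (P + smult \<epsilon> Q) t = 0} \<le> N"
      using maxN[OF rK[OF \<open>\<bar>\<epsilon>\<bar> < e\<close>]] unfolding RK by blast
  qed (use e0 epos in auto)
  then obtain \<epsilon> where eps: "0 < \<epsilon>" "\<epsilon> < min e0 e" "card {t \<in> Dom p c. poly (P + smult \<epsilon> Q) t = 0} = N"
     "\<forall>t\<in>Dom p c. poly (P + smult \<epsilon> Q) t = 0 \<longrightarrow> poly (pderiv (P + smult \<epsilon> Q)) t \<noteq> 0" by blast
  have ee: "\<bar>\<epsilon>\<bar> < e" using eps by simp
  show ?thesis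
  proof (intro exI[of _ \<epsilon>] conjI)
    show "0 < \<epsilon>" "\<epsilon> < e0" using eps by auto
    show "rate_vec m (\<kappa>(j := \<kappa> j + \<epsilon> / Nm \<alpha> \<beta> p j))" using rK[OF ee] unfolding K_def .
    show "finite (Roots p (\<kappa>(j := \<kappa> j + \<epsilon> / Nm \<alpha> \<beta> p j)) c)" using maxN[OF rK[OF ee]] unfolding K_def by blast
    show "card (Roots p (\<kappa>(j := \<kappa> j + \<epsilon> / Nm \<alpha> \<beta> p j)) c) = N" using eps(3) RK[of \<epsilon>] unfolding K_def by simp
    show "\<forall>t\<in>Roots p (\<kappa>(j := \<kappa> j + \<epsilon> / Nm \<alpha> \<beta> p j)) c.
        poly (pderiv (Fpol p (\<kappa>(j := \<kappa> j + \<epsilon> / Nm \<alpha> \<beta> p j)) c)) t \<noteq> 0"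
      using eps(4) FK[of \<epsilon>] unfolding K_def Roots_def by auto
  qed
qed

end


context net begin

definition Stab :: "nat \<Rightarrow> (nat \<Rightarrow> real) \<Rightarrow> (nat \<Rightarrow> real) \<Rightarrow> real set" where
  "Stab p \<kappa> c = {t \<in> Roots p \<kappa> c. poly (pderiv (Fpol p \<kappa> c)) t < 0}"

lemma Stab_sub: "Stab p \<kappa> c \<subseteq> Roots p \<kappa> c" unfolding Stab_def by blast

lemma count_ub:
  assumes fin: "finite (Roots p \<kappa> c)"
  shows "2 * card (Stab p \<kappa> c) \<le> card (Roots p \<kappa> c) + 1"
    and "Roots p \<kappa> c \<noteq> {} \<Longrightarrow> Min (Roots p \<kappa> c) \<notin> Stab p \<kappa> c \<Longrightarrow> 2 * card (Stab p \<kappa> c) \<le> card (Roots p \<kappa> c)"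
proof -
  have gap: "\<exists>z\<in>Roots p \<kappa> c. r1 < z \<and> z < r2" if h: "r1 \<in> Stab p \<kappa> c" "r2 \<in> Stab p \<kappa> c" "r1 < r2" for r1 r2
  proof -
    have "r1 \<in> Dom p c" "r2 \<in> Dom p c" "poly (Fpol p \<kappa> c) r1 = 0" "poly (Fpol p \<kappa> c) r2 = 0"
      "poly (pderiv (Fpol p \<kappa> c)) r1 < 0" "poly (pderiv (Fpol p \<kappa> c)) r2 < 0"
      using h unfolding Stab_def Roots_def by auto
    then obtain z where "z \<in> Dom p c" "r1 < z" "z < r2" "poly (Fpol p \<kappa> c) z = 0"
      using gap_neg[OF Dom_convex _ _ h(3)] by blast
    then show ?thesis unfolding Roots_def by blast
  qed
  note ac = alt_count[OF fin Stab_sub gap]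
  have cd: "card (Roots p \<kappa> c - Stab p \<kappa> c) = card (Roots p \<kappa> c) - card (Stab p \<kappa> c)"
    by (rule card_Diff_subset[OF finite_subset[OF Stab_sub fin] Stab_sub])
  have le: "card (Stab p \<kappa> c) \<le> card (Roots p \<kappa> c)" by (rule card_mono[OF fin Stab_sub])
  show "2 * card (Stab p \<kappa> c) \<le> card (Roots p \<kappa> c) + 1" using ac(1) cd le by linarith
  assume "Roots p \<kappa> c \<noteq> {}" "Min (Roots p \<kappa> c) \<notin> Stab p \<kappa> c"
  then show "2 * card (Stab p \<kappa> c) \<le> card (Roots p \<kappa> c)" using ac(2) cd le by linarith
qed

lemma count_lb:
  assumes fin: "finite (Roots p \<kappa> c)"
    and simple: "\<forall>t\<in>Roots p \<kappa> c. poly (pderiv (Fpol p \<kappa> c)) t \<noteq> 0"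
  shows "card (Roots p \<kappa> c) \<le> 2 * card (Stab p \<kappa> c) + 1"
    and "Roots p \<kappa> c \<noteq> {} \<Longrightarrow> Min (Roots p \<kappa> c) \<in> Stab p \<kappa> c \<Longrightarrow> card (Roots p \<kappa> c) \<le> 2 * card (Stab p \<kappa> c)"
proof -
  define U where "U = Roots p \<kappa> c - Stab p \<kappa> c"
  have Usub: "U \<subseteq> Roots p \<kappa> c" unfolding U_def by blast
  have Upos: "poly (pderiv (Fpol p \<kappa> c)) t > 0" if "t \<in> U" for t
    using that simple unfolding U_def Stab_def by force
  have gap: "\<exists>z\<in>Roots p \<kappa> c. r1 < z \<and> z < r2" if h: "r1 \<in> U" "r2 \<in> U" "r1 < r2" for r1 r2
  proof -
    have "r1 \<in> Dom p c" "r2 \<in> Dom p c" "poly (Fpol p \<kappa> c) r1 = 0" "poly (Fpol p \<kappa> c) r2 = 0"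
      using h Usub unfolding Roots_def by auto
    moreover have "poly (pderiv (Fpol p \<kappa> c)) r1 > 0" "poly (pderiv (Fpol p \<kappa> c)) r2 > 0" using Upos h by auto
    ultimately obtain z where "z \<in> Dom p c" "r1 < z" "z < r2" "poly (Fpol p \<kappa> c) z = 0"
      using gap_pos[OF Dom_convex _ _ h(3)] by blast
    then show ?thesis unfolding Roots_def by blast
  qed
  note ac = alt_count[OF fin Usub gap]
  have RU: "Roots p \<kappa> c - U = Stab p \<kappa> c" unfolding U_def using Stab_sub by blast
  have cd: "card U = card (Roots p \<kappa> c) - card (Stab p \<kappa> c)"
    unfolding U_def by (rule card_Diff_subset[OF finite_subset[OF Stab_sub fin] Stab_sub])
  have le: "card (Stab p \<kappa> c) \<le> card (Roots p \<kappa> c)" by (rule card_mono[OF fin Stab_sub])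
  show "card (Roots p \<kappa> c) \<le> 2 * card (Stab p \<kappa> c) + 1" using ac(1) cd le RU by simp
  assume "Roots p \<kappa> c \<noteq> {}" "Min (Roots p \<kappa> c) \<in> Stab p \<kappa> c"
  then have "Min (Roots p \<kappa> c) \<notin> U" unfolding U_def by blast
  then show "card (Roots p \<kappa> c) \<le> 2 * card (Stab p \<kappa> c)" using ac(2) \<open>Roots p \<kappa> c \<noteq> {}\<close> cd le RU by simp
qed

lemma ecard_pos: "p < s \<Longrightarrow> a p \<noteq> 0 \<Longrightarrow> ecard (pos_ss s m \<alpha> \<beta> p \<kappa> c) = ecard (Roots p \<kappa> c)"
  unfolding pos_ss_eq by (rule ecard_image_inj[OF inj_Xp])

lemma ecard_stab: "p < s \<Longrightarrow> a p \<noteq> 0 \<Longrightarrow> ecard (stab_ss s m \<alpha> \<beta> p \<kappa> c) = ecard (Stab p \<kappa> c)"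
  unfolding stab_ss_eq Stab_def by (rule ecard_image_inj[OF inj_Xp])

lemma ecard_le_enat: "ecard A \<le> enat N \<Longrightarrow> finite A \<and> card A \<le> N"
  unfolding ecard_def by (cases "finite A") auto

lemma ecard_fin: "finite A \<Longrightarrow> ecard A = enat (card A)" unfolding ecard_def by simp

lemma maxN:
  assumes cap: "cap_pos s m \<alpha> \<beta> = enat N" and p: "p < s" "a p \<noteq> 0" and r: "rate_vec m \<kappa>"
  shows "finite (Roots p \<kappa> c) \<and> card (Roots p \<kappa> c) \<le> N"
  using cap_pos_ge[OF p r, of c] cap ecard_pos[OF p] ecard_le_enat by metis

lemma rate_one: "rate_vec m (\<lambda>_. 1)" unfolding rate_vec_def by simp

lemma W_config:
  assumes cap: "cap_pos s m \<alpha> \<beta> = enat N"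
  shows "\<exists>\<kappa> c. rate_vec m \<kappa> \<and> ecard (pos_ss s m \<alpha> \<beta> 0 \<kappa> c) = enat N"
proof -
  define A where "A = {ecard (pos_ss s m \<alpha> \<beta> 0 \<kappa> c) | \<kappa> c. rate_vec m \<kappa>}"
  have ne: "A \<noteq> {}" unfolding A_def using rate_one by blast
  have SA: "Sup A = enat N" using cap unfolding cap_pos_def A_def .
  have fin: "finite A"
  proof (rule ccontr)
    assume "infinite A" then have "Sup A = \<infinity>" unfolding Sup_enat_def using ne by simp
    then show False using SA by simp
  qed
  have "Sup A = Max A" unfolding Sup_enat_def using ne fin by simp
  then have "enat N \<in> A" using Max_in[OF fin ne] SA by simp
  then obtain \<kappa> c where "enat N = ecard (pos_ss s m \<alpha> \<beta> 0 \<kappa> c)" "rate_vec m \<kappa>" unfolding A_def by blast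
  then show ?thesis by metis
qed

end


lemma ratio_alg:
  fixes ap ak a0 hk hp :: real
  assumes "ap \<noteq> 0" "ak \<noteq> 0" "a0 \<noteq> 0"
  shows "((ap * hk - ak * hp) / a0 = 0) \<longleftrightarrow> ((- hk / a0) / (ak / a0) = (- hp / a0) / (ap / a0))"
proof -
  have l: "((ap * hk - ak * hp) / a0 = 0) \<longleftrightarrow> ap * hk = ak * hp" using assms(3) by simp
  have r1: "(- hk / a0) / (ak / a0) = - hk / ak" using assms by (simp add: field_simps)
  have r2: "(- hp / a0) / (ap / a0) = - hp / ap" using assms by (simp add: field_simps)
  have "(- hk / ak = - hp / ap) \<longleftrightarrow> (- hk * ap = - hp * ak)" using assms(2,1) by (rule frac_eq_eq)
  then show ?thesis unfolding l r1 r2 by (simp add: mult.commute)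
qed

context net begin

lemma Bc_hat: "Bc p c i = - hat p c i / a p"
  unfolding Bcoef_def hat_def by simp

lemma cls_chg:
  assumes k: "k < s" "a k \<noteq> 0"
  shows "CL k (chg 0 k c) k = CL 0 c k"
proof -
  have Akk: "Ac k k \<noteq> 0" using Ac_self[OF k(2)] by simp
  have A0k: "Ac 0 k \<noteq> 0" using k(2) a0 unfolding Acoef_def by simp
  have "i \<in> CL k (chg 0 k c) k \<longleftrightarrow> i \<in> CL 0 c k" for i
  proof (cases "i < s \<and> a i \<noteq> 0")
    case False
    then have "i \<notin> CL k (chg 0 k c) k" "i \<notin> CL 0 c k"
      unfolding cls_def Acoef_def using Akk A0k k(2) a0 by auto
    then show ?thesis by simp
  next
    case True
    then have i: "i < s" "a i \<noteq> 0" by auto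
    have Aki: "Ac k i \<noteq> 0" "Ac 0 i \<noteq> 0" using i(2) k(2) a0 unfolding Acoef_def by auto
    have L: "i \<in> CL k (chg 0 k c) k \<longleftrightarrow> Bc k (chg 0 k c) i = 0"
      unfolding cls_def using Akk Aki i(1) by (simp add: Bc_self)
    have R: "i \<in> CL 0 c k \<longleftrightarrow> Bc 0 c i / Ac 0 i = Bc 0 c k / Ac 0 k"
      unfolding cls_def using A0k Aki i(1) by simp
    show ?thesis
    proof (cases "i = k")
      case True then show ?thesis using L R by (simp add: Bc_self)
    next
      case False
      have "Bc k (chg 0 k c) i = 0 \<longleftrightarrow> chg 0 k c i = 0" using False k(2) unfolding Bcoef_def by simp
      also have "\<dots> \<longleftrightarrow> (a k * hat 0 c i - a i * hat 0 c k) / a 0 = 0" unfolding chg_def ..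
      also have "\<dots> \<longleftrightarrow> (- hat 0 c i / a 0) / (a i / a 0) = (- hat 0 c k / a 0) / (a k / a 0)"
        by (rule ratio_alg[OF k(2) i(2) a0])
      also have "\<dots> \<longleftrightarrow> Bc 0 c i / Ac 0 i = Bc 0 c k / Ac 0 k"
        unfolding Bc_hat Acoef_def ..
      finally show ?thesis using L R by simp
    qed
  qed
  then show ?thesis by blast
qed

lemma H_chg:
  assumes kH: "k \<in> HS 0 c"
  shows "k < s" "a k \<noteq> 0" "k \<in> HS k (chg 0 k c)"
proof -
  have kR: "k \<in> Rset 0 c" using kH H_sub_R by blast
  show ks: "k < s" using Rset_lt[OF kR] .
  have "k \<in> J 0" using kR unfolding Rset_def by blast
  then show ak: "a k \<noteq> 0" unfolding Jset_def Acoef_def by auto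
  have ceq: "CL k (chg 0 k c) k = CL 0 c k" by (rule cls_chg[OF ks ak])
  have geq: "GM k (chg 0 k c) k j = GM 0 c k j" for j
    unfolding gam_def phi_def ceq ..
  have rep: "is_rep s \<alpha> \<beta> k (chg 0 k c) k"
    unfolding is_rep_iff rep_def using cls_self[OF ks] ks by simp
  have J: "k \<in> J k" using p_in_J[OF ks ak] .
  have nc: "\<not> (\<forall>j<m. \<forall>j'<m. GM 0 c k j = GM 0 c k j')" using kH unfolding Hset_def by blast
  show "k \<in> HS k (chg 0 k c)" unfolding Hset_def using rep J nc geq by simp
qed

lemma H0_nonempty:
  assumes fin: "finite (Roots 0 \<kappa> c)" and ne: "Roots 0 \<kappa> c \<noteq> {}"
  shows "HS 0 c \<noteq> {}"
proof
  assume H: "HS 0 c = {}"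
  define C where "C = (\<Sum>j<m. Nm \<alpha> \<beta> 0 j * \<kappa> j * Cst 0 c j)"
  have G: "poly (Gpol 0 \<kappa> c) t = C" for t unfolding poly_Gpol H C_def by simp
  obtain r where r: "r \<in> Roots 0 \<kappa> c" using ne by blast
  then have rD: "r \<in> Dom 0 c" and "poly (Fpol 0 \<kappa> c) r = 0" unfolding Roots_def by auto
  then have "C = 0" using F_G_root[OF rD] G by simp
  obtain \<rho> where \<rho>: "\<rho> > 0" "\<forall>y. \<bar>y - r\<bar> < \<rho> \<longrightarrow> y \<in> Dom 0 c" using Dom_open[OF rD] by blast
  have "{r <..< r + \<rho>} \<subseteq> Roots 0 \<kappa> c"
  proof
    fix y assume "y \<in> {r <..< r + \<rho>}"
    then have yD: "y \<in> Dom 0 c" using \<rho> by auto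
    then show "y \<in> Roots 0 \<kappa> c" using F_G_root[OF yD] G \<open>C = 0\<close> unfolding Roots_def by simp
  qed
  moreover have "infinite {r <..< r + \<rho>}" using \<rho> by simp
  ultimately show False using fin finite_subset by blast
qed

end


context net begin

lemma ecard_enat: "ecard A = enat N \<Longrightarrow> finite A \<and> card A = N"
  unfolding ecard_def by (cases "finite A") auto

lemma maxN':
  assumes cap: "cap_pos s m \<alpha> \<beta> = enat N" and p: "p < s" "a p \<noteq> 0"
  shows "\<And>\<kappa>'. rate_vec m \<kappa>' \<Longrightarrow> finite (Roots p \<kappa>' c) \<and> card (Roots p \<kappa>' c) \<le> N"
  using maxN[OF cap p] by blast

lemma Min_root:
  assumes "finite R" "R \<noteq> {}"
  shows "Min R \<in> R" "\<forall>t\<in>R. Min R \<le> t"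
  using assms by auto

lemma E1:
  assumes cap: "cap_pos s m \<alpha> \<beta> = enat N" and N1: "N \<ge> 1"
  shows "\<exists>\<kappa> c. rate_vec m \<kappa> \<and> finite (Stab 0 \<kappa> c) \<and> N \<le> 2 * card (Stab 0 \<kappa> c) + 1"
proof -
  obtain \<kappa> c where r: "rate_vec m \<kappa>" and e: "ecard (pos_ss s m \<alpha> \<beta> 0 \<kappa> c) = enat N"
    using W_config[OF cap] by blast
  have fc: "finite (Roots 0 \<kappa> c)" "card (Roots 0 \<kappa> c) = N"
    using ecard_enat[of "Roots 0 \<kappa> c" N] e ecard_pos[OF s_pos a0] by auto
  obtain \<epsilon> where eps: "rate_vec m (\<kappa>(0 := \<kappa> 0 + \<epsilon> / Nm \<alpha> \<beta> 0 0))"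
     "finite (Roots 0 (\<kappa>(0 := \<kappa> 0 + \<epsilon> / Nm \<alpha> \<beta> 0 0)) c)"
     "card (Roots 0 (\<kappa>(0 := \<kappa> 0 + \<epsilon> / Nm \<alpha> \<beta> 0 0)) c) = N"
     "\<forall>t\<in>Roots 0 (\<kappa>(0 := \<kappa> 0 + \<epsilon> / Nm \<alpha> \<beta> 0 0)) c.
        poly (pderiv (Fpol 0 (\<kappa>(0 := \<kappa> 0 + \<epsilon> / Nm \<alpha> \<beta> 0 0)) c)) t \<noteq> 0"
    using perturb_config[OF s_pos a0 r m_pos fc N1 maxN'[OF cap s_pos a0], of 1] by auto
  have "N \<le> 2 * card (Stab 0 (\<kappa>(0 := \<kappa> 0 + \<epsilon> / Nm \<alpha> \<beta> 0 0)) c) + 1"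
    using count_lb(1)[OF eps(2) eps(4)] eps(3) by simp
  moreover have "finite (Stab 0 (\<kappa>(0 := \<kappa> 0 + \<epsilon> / Nm \<alpha> \<beta> 0 0)) c)"
    using finite_subset[OF Stab_sub eps(2)] .
  ultimately show ?thesis using eps(1) by blast
qed

lemma E2:
  assumes cap: "cap_pos s m \<alpha> \<beta> = enat N" and N1: "N \<ge> 1" and W: "W_meets_B s m \<alpha> \<beta>"
  shows "\<exists>p \<kappa> c. p < s \<and> a p \<noteq> 0 \<and> rate_vec m \<kappa> \<and> finite (Stab p \<kappa> c) \<and> N \<le> 2 * card (Stab p \<kappa> c)"
proof -
  obtain p \<kappa> c where p: "p < s" "a p \<noteq> 0" and r: "rate_vec m \<kappa>"
    and e: "ecard (pos_ss s m \<alpha> \<beta> p \<kappa> c) = enat N" and pH: "p \<in> HS p c" and B: "in_B s m \<alpha> \<beta> p \<kappa> c"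
    using W cap unfolding W_meets_B_def by metis
  obtain tau where tau: "is_tau s m \<alpha> \<beta> p c tau" and GL: "poly (Gpol p \<kappa> c) (- Bc p c tau / Ac p tau) > 0"
    using B unfolding in_B_iff by blast
  define L where "L = - Bc p c tau / Ac p tau"
  define g0 where "g0 = poly (Gpol p \<kappa> c) L"
  define T where "T = Gterm p c L 0"
  define e0 where "e0 = g0 / (\<bar>T\<bar> + 1)"
  have g0p: "g0 > 0" using GL unfolding g0_def L_def .
  have e0p: "e0 > 0" unfolding e0_def using g0p by (simp add: add_pos_nonneg)
  have fc: "finite (Roots p \<kappa> c)" "card (Roots p \<kappa> c) = N"
    using ecard_enat[of "Roots p \<kappa> c" N] e ecard_pos[OF p] by auto
  define \<kappa>' where "\<kappa>' \<epsilon> = \<kappa>(0 := \<kappa> 0 + \<epsilon> / Nm \<alpha> \<beta> p 0)" for \<epsilon>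
  obtain \<epsilon> where eps: "0 < \<epsilon>" "\<epsilon> < e0" "rate_vec m (\<kappa>' \<epsilon>)" "finite (Roots p (\<kappa>' \<epsilon>) c)"
     "card (Roots p (\<kappa>' \<epsilon>) c) = N"
     "\<forall>t\<in>Roots p (\<kappa>' \<epsilon>) c. poly (pderiv (Fpol p (\<kappa>' \<epsilon>) c)) t \<noteq> 0"
    using perturb_config[OF p r m_pos fc N1 maxN'[OF cap p] e0p] unfolding \<kappa>'_def by blast
  have nz: "Nm \<alpha> \<beta> p 0 \<noteq> 0" using Nm_p_nz[OF p m_pos] .
  have "poly (Gpol p (\<kappa>' \<epsilon>) c) L = g0 + \<epsilon> * T"
    unfolding \<kappa>'_def Gpol_upd[OF m_pos] g0_def T_def using nz by simp
  moreover have "\<epsilon> * \<bar>T\<bar> < g0"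
  proof -
    have "\<epsilon> * (\<bar>T\<bar> + 1) < g0" using eps(2) unfolding e0_def by (simp add: pos_less_divide_eq add_pos_nonneg)
    then show ?thesis by (simp add: algebra_simps) (use eps(1) in linarith)
  qed
  moreover have "- (\<epsilon> * \<bar>T\<bar>) \<le> \<epsilon> * T"
  proof -
    have "- \<bar>T\<bar> \<le> T" by simp
    then have "\<epsilon> * (- \<bar>T\<bar>) \<le> \<epsilon> * T" using eps(1) by (intro mult_left_mono) auto
    then show ?thesis by simp
  qed
  ultimately have GL': "poly (Gpol p (\<kappa>' \<epsilon>) c) L > 0" by linarith
  have ne: "Roots p (\<kappa>' \<epsilon>) c \<noteq> {}" using eps(5) N1 by auto
  note r1 = Min_root[OF eps(4) ne]
  have maxc: "\<And>c'. finite (Roots p (\<kappa>' \<epsilon>) c') \<and> card (Roots p (\<kappa>' \<epsilon>) c') \<le> card (Roots p (\<kappa>' \<epsilon>) c)"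
    using maxN[OF cap p eps(3)] eps(5) by simp
  have "poly (pderiv (Fpol p (\<kappa>' \<epsilon>) c)) (Min (Roots p (\<kappa>' \<epsilon>) c)) < 0"
    by (rule first_stable[OF p pH tau maxc r1 GL'[unfolded L_def]]) (use eps(6) r1 in blast)
  then have "Min (Roots p (\<kappa>' \<epsilon>) c) \<in> Stab p (\<kappa>' \<epsilon>) c" using r1 unfolding Stab_def by blast
  then have "N \<le> 2 * card (Stab p (\<kappa>' \<epsilon>) c)" using count_lb(2)[OF eps(4) eps(6) ne] eps(5) by simp
  moreover have "finite (Stab p (\<kappa>' \<epsilon>) c)" using finite_subset[OF Stab_sub eps(4)] .
  ultimately show ?thesis using p eps(3) by blast
qed

lemma E3:
  assumes cap: "cap_pos s m \<alpha> \<beta> = enat N" and p: "p < s" "a p \<noteq> 0" and pH: "p \<in> HS p c"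
    and r: "rate_vec m \<kappa>" and fc: "finite (Roots p \<kappa> c)" "card (Roots p \<kappa> c) = N" and N1: "N \<ge> 1"
    and st: "Min (Roots p \<kappa> c) \<in> Stab p \<kappa> c"
  shows "W_meets_B s m \<alpha> \<beta>"
proof -
  have ne: "Roots p \<kappa> c \<noteq> {}" using fc N1 by auto
  note r1 = Min_root[OF fc(1) ne]
  have t0: "Min (Roots p \<kappa> c) \<in> Dom p c" using r1 unfolding Roots_def by blast
  obtain tau where tau: "is_tau s m \<alpha> \<beta> p c tau" using tau_exists[OF p pH t0] by blast
  define L where "L = - Bc p c tau / Ac p tau"
  have maxc: "\<And>c'. finite (Roots p \<kappa> c') \<and> card (Roots p \<kappa> c') \<le> card (Roots p \<kappa> c)"
    using maxN[OF cap p r] fc by simp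
  have stp: "poly (pderiv (Fpol p \<kappa> c)) (Min (Roots p \<kappa> c)) < 0" using st unfolding Stab_def by blast
  have G0: "poly (Gpol p \<kappa> c) L \<ge> 0"
    using stable_first_GL[OF p pH tau maxc r1 stp] unfolding L_def .
  have Lsub: "Lset s m \<alpha> \<beta> p c tau \<subseteq> {..<m}" unfolding Lset_def by auto
  obtain j0 where j0: "j0 < m" "GM p c tau j0 = 0" using gam_zero_ex[of p c tau] by blast
  have j0L: "j0 \<in> Lset s m \<alpha> \<beta> p c tau" unfolding Lset_def using j0 by simp
  have "\<exists>j\<in>Lset s m \<alpha> \<beta> p c tau. Nm \<alpha> \<beta> p j > 0"
  proof (rule ccontr)
    assume "\<not> (\<exists>j\<in>Lset s m \<alpha> \<beta> p c tau. Nm \<alpha> \<beta> p j > 0)"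
    then have neg: "Nm \<alpha> \<beta> p j < 0" if "j \<in> Lset s m \<alpha> \<beta> p c tau" for j
      using Nm_p_nz[OF p] that Lsub by force
    define f where "f j = Nm \<alpha> \<beta> p j * \<kappa> j * Gterm p c L j" for j
    have fle: "f j \<le> 0" if "j < m" for j
    proof (cases "j \<in> Lset s m \<alpha> \<beta> p c tau")
      case True
      have "Gterm p c L j > 0" "\<kappa> j > 0" using Gterm_L(1)[OF tau t0 True] r that unfolding L_def rate_vec_def by auto
      then show ?thesis using neg[OF True] unfolding f_def by (simp add: mult_neg_pos mult_pos_pos less_imp_le)
    next
      case False
      then show ?thesis using Gterm_L(2)[OF tau t0 False that] unfolding f_def L_def by simp
    qed
    have fj0: "f j0 < 0"
    proof -
      have "Gterm p c L j0 > 0" "\<kappa> j0 > 0" using Gterm_L(1)[OF tau t0 j0L] r j0(1) unfolding L_def rate_vec_def by auto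
      then show ?thesis using neg[OF j0L] unfolding f_def by (simp add: mult_neg_pos)
    qed
    have "poly (Gpol p \<kappa> c) L = (\<Sum>j<m. f j)" unfolding poly_Gpol_term f_def ..
    also have "\<dots> = f j0 + (\<Sum>j\<in>{..<m} - {j0}. f j)" using j0(1) by (simp add: sum.remove)
    also have "\<dots> < 0" using fj0 sum_nonpos[of "{..<m} - {j0}" f] fle by force
    finally show False using G0 by simp
  qed
  then obtain j where jL: "j \<in> Lset s m \<alpha> \<beta> p c tau" and jpos: "Nm \<alpha> \<beta> p j > 0" by blast
  have jm: "j < m" using jL Lsub by blast
  define \<kappa>' where "\<kappa>' \<epsilon> = \<kappa>(j := \<kappa> j + \<epsilon> / Nm \<alpha> \<beta> p j)" for \<epsilon>
  obtain \<epsilon> where eps: "0 < \<epsilon>" "rate_vec m (\<kappa>' \<epsilon>)" "finite (Roots p (\<kappa>' \<epsilon>) c)"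
     "card (Roots p (\<kappa>' \<epsilon>) c) = N"
    using perturb_config[OF p r jm fc N1 maxN'[OF cap p], of 1] unfolding \<kappa>'_def by auto
  have "poly (Gpol p (\<kappa>' \<epsilon>) c) L = poly (Gpol p \<kappa> c) L + \<epsilon> * Gterm p c L j"
    unfolding \<kappa>'_def Gpol_upd[OF jm] using jpos by simp
  moreover have "Gterm p c L j > 0" using Gterm_L(1)[OF tau t0 jL] unfolding L_def .
  ultimately have "poly (Gpol p (\<kappa>' \<epsilon>) c) L > 0" using G0 eps(1) by (simp add: add_nonneg_pos)
  then have B: "in_B s m \<alpha> \<beta> p (\<kappa>' \<epsilon>) c" unfolding in_B_iff L_def using tau by blast
  have "ecard (pos_ss s m \<alpha> \<beta> p (\<kappa>' \<epsilon>) c) = cap_pos s m \<alpha> \<beta>"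
    unfolding ecard_pos[OF p] cap using ecard_fin[OF eps(3)] eps(4) by simp
  then show ?thesis unfolding W_meets_B_def using p pH eps(2) B by blast
qed

lemma UB_W:
  assumes cap: "cap_pos s m \<alpha> \<beta> = enat N" and N1: "N \<ge> 1" and r: "rate_vec m \<kappa>"
    and fc: "finite (Roots 0 \<kappa> c)" "card (Roots 0 \<kappa> c) = N"
    and big: "N + 1 \<le> 2 * card (Stab 0 \<kappa> c)"
  shows "W_meets_B s m \<alpha> \<beta>"
proof -
  have ne: "Roots 0 \<kappa> c \<noteq> {}" using fc N1 by auto
  obtain k where kH: "k \<in> HS 0 c" using H0_nonempty[OF fc(1) ne] by blast
  note kk = H_chg[OF kH]
  define c' where "c' = chg 0 k c"
  have pe: "pos_ss s m \<alpha> \<beta> 0 \<kappa> c = pos_ss s m \<alpha> \<beta> k \<kappa> c'"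
    unfolding c'_def by (rule pos_ss_chg[OF s_pos kk(1) a0 kk(2)])
  have se: "stab_ss s m \<alpha> \<beta> 0 \<kappa> c = stab_ss s m \<alpha> \<beta> k \<kappa> c'"
    unfolding c'_def by (rule stab_ss_chg[OF s_pos kk(1) a0 kk(2)])
  have eR: "ecard (Roots k \<kappa> c') = enat N"
    using pe ecard_pos[OF s_pos a0] ecard_pos[OF kk(1,2)] ecard_fin[OF fc(1)] fc(2) by metis
  then have fc': "finite (Roots k \<kappa> c')" "card (Roots k \<kappa> c') = N" using ecard_enat by blast+
  have finS: "finite (Stab 0 \<kappa> c)" using finite_subset[OF Stab_sub fc(1)] .
  have eS: "ecard (Stab k \<kappa> c') = enat (card (Stab 0 \<kappa> c))"
    using se ecard_stab[OF s_pos a0] ecard_stab[OF kk(1,2)] ecard_fin[OF finS] by metis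
  then have cS: "card (Stab k \<kappa> c') = card (Stab 0 \<kappa> c)" using ecard_enat by blast
  have ne': "Roots k \<kappa> c' \<noteq> {}" using fc' N1 by auto
  have "Min (Roots k \<kappa> c') \<in> Stab k \<kappa> c'"
  proof (rule ccontr)
    assume "Min (Roots k \<kappa> c') \<notin> Stab k \<kappa> c'"
    then have "2 * card (Stab k \<kappa> c') \<le> N" using count_ub(2)[OF fc'(1) ne'] fc'(2) by simp
    then show False using big cS by simp
  qed
  then show ?thesis using E3[OF cap kk(1,2) kk(3)[folded c'_def] r fc' N1] by blast
qed

end


context net begin

lemma stab_card:
  assumes cap: "cap_pos s m \<alpha> \<beta> = enat N" and r: "rate_vec m \<kappa>"
  shows "finite (Roots 0 \<kappa> c)" "card (Roots 0 \<kappa> c) \<le> N" "finite (Stab 0 \<kappa> c)"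
    "ecard (stab_ss s m \<alpha> \<beta> 0 \<kappa> c) = enat (card (Stab 0 \<kappa> c))"
proof -
  show f: "finite (Roots 0 \<kappa> c)" "card (Roots 0 \<kappa> c) \<le> N" using maxN[OF cap s_pos a0 r] by auto
  show fs: "finite (Stab 0 \<kappa> c)" using finite_subset[OF Stab_sub f(1)] .
  show "ecard (stab_ss s m \<alpha> \<beta> 0 \<kappa> c) = enat (card (Stab 0 \<kappa> c))"
    using ecard_stab[OF s_pos a0] ecard_fin[OF fs] by simp
qed

lemma U1:
  assumes cap: "cap_pos s m \<alpha> \<beta> = enat N" and r: "rate_vec m \<kappa>"
  shows "ecard (stab_ss s m \<alpha> \<beta> 0 \<kappa> c) \<le> enat ((N + 1) div 2)"
proof -
  note sc = stab_card[OF cap r, of c]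
  have "2 * card (Stab 0 \<kappa> c) \<le> N + 1" using count_ub(1)[OF sc(1)] sc(2) by linarith
  then have "card (Stab 0 \<kappa> c) \<le> (N + 1) div 2" by linarith
  then show ?thesis using sc(4) by simp
qed

lemma U2:
  assumes cap: "cap_pos s m \<alpha> \<beta> = enat N" and r: "rate_vec m \<kappa>" and odd: "odd N"
    and nW: "\<not> W_meets_B s m \<alpha> \<beta>"
  shows "ecard (stab_ss s m \<alpha> \<beta> 0 \<kappa> c) \<le> enat ((N - 1) div 2)"
proof -
  note sc = stab_card[OF cap r, of c]
  have N1: "N \<ge> 1" using odd by (cases N) auto
  have ub: "2 * card (Stab 0 \<kappa> c) \<le> card (Roots 0 \<kappa> c) + 1" using count_ub(1)[OF sc(1)] .
  have "2 * card (Stab 0 \<kappa> c) \<le> N"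
  proof (cases "card (Roots 0 \<kappa> c) = N")
    case True
    show ?thesis
    proof (rule ccontr)
      assume "\<not> 2 * card (Stab 0 \<kappa> c) \<le> N"
      then have "N + 1 \<le> 2 * card (Stab 0 \<kappa> c)" by simp
      then have "W_meets_B s m \<alpha> \<beta>" using UB_W[OF cap N1 r sc(1) True] by blast
      then show False using nW by simp
    qed
  next
    case False
    then show ?thesis using ub sc(2) by linarith
  qed
  moreover obtain b where b: "N = 2 * b + 1" using odd by (elim oddE) blast
  ultimately have "card (Stab 0 \<kappa> c) \<le> (N - 1) div 2" by simp
  then show ?thesis using sc(4) by simp
qed

lemma L1:
  assumes cap: "cap_pos s m \<alpha> \<beta> = enat N" and N1: "N \<ge> 1"
  shows "\<exists>\<kappa> c. rate_vec m \<kappa> \<and> enat (N div 2) \<le> ecard (stab_ss s m \<alpha> \<beta> 0 \<kappa> c)"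
proof -
  obtain \<kappa> c where r: "rate_vec m \<kappa>" and f: "finite (Stab 0 \<kappa> c)" and le: "N \<le> 2 * card (Stab 0 \<kappa> c) + 1"
    using E1[OF cap N1] by blast
  have "N div 2 \<le> card (Stab 0 \<kappa> c)" using le by linarith
  moreover have "ecard (stab_ss s m \<alpha> \<beta> 0 \<kappa> c) = enat (card (Stab 0 \<kappa> c))"
    using ecard_stab[OF s_pos a0] ecard_fin[OF f] by simp
  ultimately have "enat (N div 2) \<le> ecard (stab_ss s m \<alpha> \<beta> 0 \<kappa> c)" by simp
  then show ?thesis using r by blast
qed

lemma L2:
  assumes cap: "cap_pos s m \<alpha> \<beta> = enat N" and N1: "N \<ge> 1" and W: "W_meets_B s m \<alpha> \<beta>"
  shows "\<exists>\<kappa> c. rate_vec m \<kappa> \<and> enat ((N + 1) div 2) \<le> ecard (stab_ss s m \<alpha> \<beta> 0 \<kappa> c)"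
proof -
  obtain p \<kappa> c where p: "p < s" "a p \<noteq> 0" and r: "rate_vec m \<kappa>" and f: "finite (Stab p \<kappa> c)"
    and le: "N \<le> 2 * card (Stab p \<kappa> c)"
    using E2[OF cap N1 W] by blast
  have "(N + 1) div 2 \<le> card (Stab p \<kappa> c)" using le by linarith
  moreover have "stab_ss s m \<alpha> \<beta> p \<kappa> c = stab_ss s m \<alpha> \<beta> 0 \<kappa> (chg p 0 c)"
    by (rule stab_ss_chg[OF p(1) s_pos p(2) a0])
  moreover have "ecard (stab_ss s m \<alpha> \<beta> p \<kappa> c) = enat (card (Stab p \<kappa> c))"
    using ecard_stab[OF p] ecard_fin[OF f] by simp
  ultimately have "enat ((N + 1) div 2) \<le> ecard (stab_ss s m \<alpha> \<beta> 0 \<kappa> (chg p 0 c))" by simp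
  then show ?thesis using r by blast
qed

lemma cap_stab_eq:
  assumes up: "\<And>\<kappa> c. rate_vec m \<kappa> \<Longrightarrow> ecard (stab_ss s m \<alpha> \<beta> 0 \<kappa> c) \<le> enat K"
    and lo: "\<exists>\<kappa> c. rate_vec m \<kappa> \<and> enat K \<le> ecard (stab_ss s m \<alpha> \<beta> 0 \<kappa> c)"
  shows "cap_stab s m \<alpha> \<beta> = enat K"
proof (rule antisym)
  show "cap_stab s m \<alpha> \<beta> \<le> enat K" unfolding cap_stab_def by (rule Sup_least) (use up in blast)
  obtain \<kappa> c where "rate_vec m \<kappa>" "enat K \<le> ecard (stab_ss s m \<alpha> \<beta> 0 \<kappa> c)" using lo by blast
  then show "enat K \<le> cap_stab s m \<alpha> \<beta>" unfolding cap_stab_def by (blast intro: Sup_upper2)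
qed

lemma main:
  assumes cap: "cap_pos s m \<alpha> \<beta> = enat N"
  shows "even N \<Longrightarrow> cap_stab s m \<alpha> \<beta> = enat (N div 2)"
    and "odd N \<Longrightarrow> \<not> W_meets_B s m \<alpha> \<beta> \<Longrightarrow> cap_stab s m \<alpha> \<beta> = enat ((N - 1) div 2)"
    and "odd N \<Longrightarrow> W_meets_B s m \<alpha> \<beta> \<Longrightarrow> cap_stab s m \<alpha> \<beta> = enat ((N + 1) div 2)"
proof -
  have z: "enat 0 \<le> x" for x :: enat by (simp add: zero_enat_def[symmetric])
  have lo0: "\<exists>\<kappa> c. rate_vec m \<kappa> \<and> enat 0 \<le> ecard (stab_ss s m \<alpha> \<beta> 0 \<kappa> c)" using rate_one z by blast
  {
    assume ev: "even N"
    have up: "ecard (stab_ss s m \<alpha> \<beta> 0 \<kappa> c) \<le> enat (N div 2)" if "rate_vec m \<kappa>" for \<kappa> c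
    proof -
      have "(N + 1) div 2 = N div 2" using ev by (elim evenE) simp
      then show ?thesis using U1[OF cap that, of c] by simp
    qed
    show "cap_stab s m \<alpha> \<beta> = enat (N div 2)"
    proof (cases "N = 0")
      case True then show ?thesis using cap_stab_eq[OF up] lo0 by simp
    next
      case False then show ?thesis using cap_stab_eq[OF up L1[OF cap]] by simp
    qed
  }
  {
    assume od: "odd N" and nW: "\<not> W_meets_B s m \<alpha> \<beta>"
    have N1: "N \<ge> 1" using od by (cases N) auto
    have e: "N div 2 = (N - 1) div 2" using od by (elim oddE) simp
    have lo: "\<exists>\<kappa> c. rate_vec m \<kappa> \<and> enat ((N - 1) div 2) \<le> ecard (stab_ss s m \<alpha> \<beta> 0 \<kappa> c)"
      using L1[OF cap N1] unfolding e .
    show "cap_stab s m \<alpha> \<beta> = enat ((N - 1) div 2)"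
      using cap_stab_eq[OF U2[OF cap _ od nW] lo] by simp
  }
  {
    assume od: "odd N" and W: "W_meets_B s m \<alpha> \<beta>"
    have N1: "N \<ge> 1" using od by (cases N) auto
    show "cap_stab s m \<alpha> \<beta> = enat ((N + 1) div 2)"
      using cap_stab_eq[OF U1[OF cap] L2[OF cap N1 W]] by simp
  }
qed

end

theorem theorem3p1:
  fixes s m :: nat and \<alpha> \<beta> :: "nat \<Rightarrow> nat \<Rightarrow> nat"
  assumes "is_network s m \<alpha> \<beta>"
    and "one_dim_stoich s m \<alpha> \<beta>"
    and "Nm \<alpha> \<beta> 0 0 \<noteq> 0"
    and "cap_pos s m \<alpha> \<beta> < \<infinity>"
  shows "(\<forall>n. cap_pos s m \<alpha> \<beta> = enat n \<and> even n \<longrightarrow> cap_stab s m \<alpha> \<beta> = enat (n div 2)) \<and>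
         (\<forall>n. cap_pos s m \<alpha> \<beta> = enat n \<and> odd n \<longrightarrow>
           (\<not> W_meets_B s m \<alpha> \<beta> \<longrightarrow> cap_stab s m \<alpha> \<beta> = enat ((n - 1) div 2)) \<and>
           (W_meets_B s m \<alpha> \<beta> \<longrightarrow> cap_stab s m \<alpha> \<beta> = enat ((n + 1) div 2)))"
proof -
  interpret net s m \<alpha> \<beta> using assms(1-3) by unfold_locales
  show ?thesis using main by blast
qed


end
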